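(* Let $n\ge1$, $s\in\{1,\dots,n\}$ and let $C\in\mathbb{R}^{n\times n}$ be symmetric positive definite. Let $x^*$ be an optimal solution of the problem defining $\hat z(\lambda_{\min}(C))$, and let $\beta^*=(\beta^*_1\ge\dots\ge\beta^*_n)$ be the eigenvalues of $M_0(x^* )$ in nonincreasing order. Let $k\in\{0,\dots,s-1\}$ be the integer with $\beta^*_k>\frac{1}{s-k}\sum_{i=k+1}^n\beta^*_i\ge\beta^*_{k+1}$, where $\beta^*_0=\infty$. Then: (i) with the convention $(x^* )^\downarrow_0=0$, $$\hat z(0)-\hat z(\lambda_{\min}(C))\ge\Delta^{lb}:=\lambda_{\min}(C)\Big(k-\sum_{i=1}^k(x^* )^\downarrow_i\Big)\Big(\frac{s-k}{\sum_{i=k+1}^n\beta^*_i}-\frac{1}{\beta^*_k}\Big)\ge0;$$ (ii) if $k\ge1$ and $(x^* )^\downarrow_k<1$, then $\hat z(0)>\hat z(\lambda_{\min}(C))$.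
   Context: $\lambda_{\min}(C)$ is the smallest eigenvalue of $C$; $y^\downarrow_i$ denotes the $i$-th largest entry of a vector $y$, and $1/\infty=0$. For $0\le t\le\lambda_{\min}(C)$ let $A(t)\in\mathbb{R}^{n\times n}$ be a Cholesky factor of $C-tI$ (so $C-tI=A(t)^\top A(t)$), with $i$-th column $a_i(t)$, and for $x\in[0,1]^n$ let $M_t(x)=\sum_i x_i a_i(t)a_i(t)^\top$. For a positive semidefinite $X$ with eigenvalues $\lambda_1(X)\ge\dots\ge\lambda_n(X)$ and $t\ge0$, $\Phi_s(X;t)=\sum_{i=1}^s\log(\lambda_i(X)+t)$ (natural log); $\widehat{\Phi}_s(\cdot\,;t)$ is its concave envelope on the cone of $n\times n$ positive semidefinite matrices (pointwise infimum of all concave functions there that are $\ge\Phi_s(\cdot\,;t)$). $\hat z(t)=\max\{\widehat{\Phi}_s(M_t(x);t) : x\in[0,1]^n,\ \sum_i x_i=s\}$. *)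

theory Defs
  imports "Jordan_Normal_Form.Char_Poly" "HOL-Library.Extended_Real"
begin

(* For real symmetric matrices this exists. *)
definition eigs :: "real mat \<Rightarrow> real list" where
  "eigs X = (THE ys. length ys = dim_row X \<and> sorted (rev ys) \<and>
                     char_poly X = (\<Prod>y\<leftarrow>ys. [:- y, 1:]))"

definition eig :: "real mat \<Rightarrow> nat \<Rightarrow> real" where
  "eig X i = eigs X ! (i - 1)"

definition lambda_min :: "real mat \<Rightarrow> real" where
  "lambda_min X = eig X (dim_row X)"

definition sym_pd :: "nat \<Rightarrow> real mat \<Rightarrow> bool" where
  "sym_pd n C \<longleftrightarrow> C \<in> carrier_mat n n \<and> transpose_mat C = C \<and>
     (\<forall>v \<in> carrier_vec n. v \<noteq> 0\<^sub>v n \<longrightarrow> v \<bullet> (C *\<^sub>v v) > 0)"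

definition psd_cone :: "nat \<Rightarrow> real mat set" where
  "psd_cone n = {X \<in> carrier_mat n n. transpose_mat X = X \<and>
     (\<forall>v \<in> carrier_vec n. v \<bullet> (X *\<^sub>v v) \<ge> 0)}"

definition cholesky_factor :: "nat \<Rightarrow> real mat \<Rightarrow> real mat \<Rightarrow> bool" where
  "cholesky_factor n B A \<longleftrightarrow> A \<in> carrier_mat n n \<and> upper_triangular A \<and>
     (\<forall>i < n. A $$ (i, i) \<ge> 0) \<and> transpose_mat A * A = B"

(* M(x) = sum_i x_i a_i a_i^T, a_i = i-th column of A (indices 0..n-1) *)
definition Mx :: "nat \<Rightarrow> real mat \<Rightarrow> (nat \<Rightarrow> real) \<Rightarrow> real mat" where
  "Mx n A x = mat n n (\<lambda>(j, l). \<Sum>i<n. x i * (A $$ (j, i) * A $$ (l, i)))"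

(* natural log extended with log 0 = -infinity (only used for nonneg. arguments) *)
definition eln :: "real \<Rightarrow> ereal" where
  "eln y = (if y > 0 then ereal (ln y) else - \<infinity>)"

definition Phi :: "nat \<Rightarrow> real mat \<Rightarrow> real \<Rightarrow> ereal" where
  "Phi s X t = (\<Sum>i\<in>{1..s}. eln (eig X i + t))"

definition concave_on_psd :: "nat \<Rightarrow> (real mat \<Rightarrow> real) \<Rightarrow> bool" where
  "concave_on_psd n g \<longleftrightarrow> (\<forall>X\<in>psd_cone n. \<forall>Y\<in>psd_cone n. \<forall>\<theta>::real. 0 \<le> \<theta> \<and> \<theta> \<le> 1 \<longrightarrow>
     g (\<theta> \<cdot>\<^sub>m X + (1 - \<theta>) \<cdot>\<^sub>m Y) \<ge> \<theta> * g X + (1 - \<theta>) * g Y)"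

definition Phi_hat :: "nat \<Rightarrow> nat \<Rightarrow> real mat \<Rightarrow> real \<Rightarrow> ereal" where
  "Phi_hat n s X t = (INF g \<in> {g. concave_on_psd n g \<and>
       (\<forall>Y\<in>psd_cone n. Phi s Y t \<le> ereal (g Y))}. ereal (g X))"

definition feasible :: "nat \<Rightarrow> nat \<Rightarrow> (nat \<Rightarrow> real) \<Rightarrow> bool" where
  "feasible n s x \<longleftrightarrow> (\<forall>i<n. 0 \<le> x i \<and> x i \<le> 1) \<and> (\<Sum>i<n. x i) = real s"

(* zhat(t), computed with Cholesky factor A = A(t) *)
definition zhat :: "nat \<Rightarrow> nat \<Rightarrow> real mat \<Rightarrow> real \<Rightarrow> ereal" where
  "zhat n s A t = (SUP x \<in> {x. feasible n s x}. Phi_hat n s (Mx n A x) t)"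

definition optimal :: "nat \<Rightarrow> nat \<Rightarrow> real mat \<Rightarrow> real \<Rightarrow> (nat \<Rightarrow> real) \<Rightarrow> bool" where
  "optimal n s A t x \<longleftrightarrow> feasible n s x \<and>
     (\<forall>y. feasible n s y \<longrightarrow> Phi_hat n s (Mx n A y) t \<le> Phi_hat n s (Mx n A x) t)"

definition xdown :: "nat \<Rightarrow> (nat \<Rightarrow> real) \<Rightarrow> nat \<Rightarrow> real" where
  "xdown n x i = (if i = 0 then 0 else rev (sort (map x [0..<n])) ! (i - 1))"

end

theory Submission
  imports Defs "HOL-Combinatorics.List_Permutation"
begin

lemma mult_entry:
  assumes "A \<in> carrier_mat n m" "B \<in> carrier_mat m p" "i < n" "j < p"
  shows "(A * B) $$ (i,j) = (\<Sum>l<m. A $$ (i,l) * B $$ (l,j))"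
  using assms by (simp add: scalar_prod_def lessThan_atLeast0)

lemma mult_vec_entry:
  assumes "A \<in> carrier_mat n m" "v \<in> carrier_vec m" "i < n"
  shows "(A *\<^sub>v v) $ i = (\<Sum>l<m. A $$ (i,l) * v $ l)"
  using assms by (simp add: scalar_prod_def lessThan_atLeast0)

lemma sprod_sum: "v \<in> carrier_vec n \<Longrightarrow> w \<bullet> v = (\<Sum>l<n. w $ l * v $ l)"
  by (simp add: scalar_prod_def lessThan_atLeast0)

lemma sym_real_eigval:
  fixes Y :: "real mat"
  assumes Y: "Y \<in> carrier_mat n n" and sym: "transpose_mat Y = Y" and n: "n > 0"
  shows "\<exists>r. eigenvalue Y r"
proof -
  define Yc where "Yc = map_mat complex_of_real Y"
  have Yc: "Yc \<in> carrier_mat n n" using Y by (simp add: Yc_def)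
  obtain as where as: "char_poly Yc = (\<Prod>a\<leftarrow>as. [:- a, 1:])" "length as = n"
    using char_poly_factorized[OF Yc] by blast
  define a where "a = hd as"
  have "a \<in> set as" using as n unfolding a_def by (cases as) auto
  then have "poly (char_poly Yc) a = 0" unfolding as(1) by (simp add: poly_prod_list_zero_iff)
  then have "eigenvalue Yc a" using eigenvalue_root_char_poly[OF Yc] by simp
  then obtain v where ev: "eigenvector Yc v a" unfolding eigenvalue_def by blast
  then have v: "v \<in> carrier_vec n" and v0: "v \<noteq> 0\<^sub>v n" and Yv: "Yc *\<^sub>v v = a \<cdot>\<^sub>v v"
    using Yc unfolding eigenvector_def by auto
  define N where "N = (\<Sum>i<n. cnj (v $ i) * v $ i)"
  have N: "N = of_real (\<Sum>i<n. (cmod (v $ i))^2)"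
    unfolding N_def of_real_sum by (rule sum.cong[OF refl]) (metis complex_norm_square mult.commute)
  have "\<exists>i<n. v $ i \<noteq> 0" using v v0 by (metis eq_vecI index_zero_vec(1) index_zero_vec(2) carrier_vecD)
  then obtain i0 where i0: "i0 < n" "v $ i0 \<noteq> 0" by blast
  have Npos: "(\<Sum>i<n. (cmod (v $ i))^2) > 0"
  proof -
    have "(\<Sum>i<n. (cmod (v $ i))^2) \<ge> (cmod (v $ i0))^2"
      by (rule member_le_sum) (use i0 in auto)
    moreover have "(cmod (v $ i0))^2 > 0" using i0 by simp
    ultimately show ?thesis by linarith
  qed
  define S where "S = (\<Sum>i<n. \<Sum>j<n. cnj (v $ i) * complex_of_real (Y $$ (i,j)) * v $ j)"
  have "S = (\<Sum>i<n. cnj (v $ i) * (Yc *\<^sub>v v) $ i)"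
    unfolding S_def
  proof (rule sum.cong[OF refl])
    fix i assume i: "i \<in> {..<n}"
    have "(Yc *\<^sub>v v) $ i = (\<Sum>j<n. Yc $$ (i,j) * v $ j)"
      using mult_vec_entry[OF Yc v] i by simp
    also have "\<dots> = (\<Sum>j<n. complex_of_real (Y $$ (i,j)) * v $ j)"
      using i Y unfolding Yc_def by (intro sum.cong) auto
    finally show "(\<Sum>j<n. cnj (v $ i) * complex_of_real (Y $$ (i, j)) * v $ j) = cnj (v $ i) * (Yc *\<^sub>v v) $ i"
      by (simp add: sum_distrib_left mult.assoc)
  qed
  also have "\<dots> = a * N" unfolding Yv N_def using v
    by (auto simp: sum_distrib_left intro!: sum.cong)
  finally have SaN: "S = a * N" .
  have "cnj S = (\<Sum>i<n. \<Sum>j<n. v $ i * complex_of_real (Y $$ (i,j)) * cnj (v $ j))"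
    unfolding S_def by (simp add: cnj_sum)
  also have "\<dots> = (\<Sum>j<n. \<Sum>i<n. v $ i * complex_of_real (Y $$ (i,j)) * cnj (v $ j))"
    by (rule sum.swap)
  also have "\<dots> = S" unfolding S_def
  proof (rule sum.cong[OF refl], rule sum.cong[OF refl])
    fix i j assume "i \<in> {..<n}" "j \<in> {..<n}"
    then have "Y $$ (j,i) = Y $$ (i,j)" using sym Y
      by (metis carrier_matD(1) carrier_matD(2) index_transpose_mat(1) lessThan_iff)
    then show "v $ j * complex_of_real (Y $$ (j, i)) * cnj (v $ i) = cnj (v $ i) * complex_of_real (Y $$ (i, j)) * v $ j"
      by simp
  qed
  finally have "Im S = 0" by (metis cnj.simps(2) neg_equal_zero)
  then have "Im a = 0" using SaN N Npos by simp
  then have aeq: "a = of_real (Re a)" by (simp add: complex_eq_iff)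
  have "poly (char_poly Yc) (of_real (Re a)) = of_real (poly (char_poly Y) (Re a))"
    unfolding Yc_def of_real_hom.char_poly_hom[OF Y] by simp
  then have "poly (char_poly Y) (Re a) = 0"
    using \<open>poly (char_poly Yc) a = 0\<close> aeq by simp
  then show ?thesis using eigenvalue_root_char_poly[OF Y] by blast
qed


definition dg :: "nat \<Rightarrow> (nat \<Rightarrow> real) \<Rightarrow> real mat" where
  "dg n f = mat n n (\<lambda>(i,j). if i = j then f i else 0)"

definition orth :: "nat \<Rightarrow> real mat \<Rightarrow> bool" where
  "orth n U \<longleftrightarrow> U \<in> carrier_mat n n \<and> transpose_mat U * U = 1\<^sub>m n"

definition ext :: "real \<Rightarrow> nat \<Rightarrow> real mat \<Rightarrow> real mat" where
  "ext c n M = mat (Suc n) (Suc n) (\<lambda>(i,j). if i = 0 \<and> j = 0 then c else if i = 0 \<or> j = 0 then 0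
      else M $$ (i - 1, j - 1))"

lemma sq_mult_carrier[simp]: "A \<in> carrier_mat m m \<Longrightarrow> B \<in> carrier_mat m m \<Longrightarrow> A * B \<in> carrier_mat m m"
  by (rule mult_carrier_mat)
lemma sq_tr_carrier[simp]: "A \<in> carrier_mat m m \<Longrightarrow> transpose_mat A \<in> carrier_mat m m"
  by simp
lemma sq_assoc: "A \<in> carrier_mat m m \<Longrightarrow> B \<in> carrier_mat m m \<Longrightarrow> C \<in> carrier_mat m m \<Longrightarrow>
  A * B * C = A * (B * C)" by (rule assoc_mult_mat)

lemma dg_carrier[simp]: "dg n f \<in> carrier_mat n n" by (simp add: dg_def)
lemma ext_carrier[simp]: "ext c n M \<in> carrier_mat (Suc n) (Suc n)" by (simp add: ext_def)

lemma orth_right: assumes "orth n U" shows "U * transpose_mat U = 1\<^sub>m n"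
  using assms mat_mult_left_right_inverse[of "transpose_mat U" n U] unfolding orth_def by auto

lemma ext_mult:
  assumes A: "A \<in> carrier_mat n n" and B: "B \<in> carrier_mat n n"
  shows "ext a n A * ext b n B = ext (a * b) n (A * B)"
proof (rule eq_matI)
  fix i j assume i: "i < dim_row (ext (a * b) n (A * B))" and j: "j < dim_col (ext (a * b) n (A * B))"
  then have i': "i < Suc n" and j': "j < Suc n" by (auto simp: ext_def)
  have "(ext a n A * ext b n B) $$ (i,j) = (\<Sum>l<Suc n. ext a n A $$ (i,l) * ext b n B $$ (l,j))"
    by (rule mult_entry[OF ext_carrier ext_carrier i' j'])
  also have "\<dots> = ext a n A $$ (i,0) * ext b n B $$ (0,j) + (\<Sum>l<n. ext a n A $$ (i,Suc l) * ext b n B $$ (Suc l,j))"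
    by (rule sum.lessThan_Suc_shift)
  also have "\<dots> = ext (a * b) n (A * B) $$ (i,j)"
  proof (cases "i = 0 \<or> j = 0")
    case True
    then show ?thesis using i' j' by (auto simp: ext_def)
  next
    case False
    then have "i - 1 < n" "j - 1 < n" using i' j' by auto
    then show ?thesis using False i' j' A B by (simp add: ext_def mult_entry[OF A B] del: index_mult_mat)
  qed
  finally show "(ext a n A * ext b n B) $$ (i,j) = ext (a * b) n (A * B) $$ (i,j)" .
qed (auto simp: ext_def)

lemma ext_transpose: "A \<in> carrier_mat n n \<Longrightarrow> transpose_mat (ext c n A) = ext c n (transpose_mat A)"
  by (rule eq_matI) (auto simp: ext_def)

lemma ext_one: "ext 1 n (1\<^sub>m n) = 1\<^sub>m (Suc n)"
  by (rule eq_matI) (auto simp: ext_def)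

lemma ext_dg: "ext c n (dg n f) = dg (Suc n) (\<lambda>i. if i = 0 then c else f (i - 1))"
  by (rule eq_matI) (auto simp: ext_def dg_def)

lemma real_eigvec_unit:
  fixes Y :: "real mat"
  assumes Y: "Y \<in> carrier_mat n n" and sym: "transpose_mat Y = Y" and n: "n > 0"
  shows "\<exists>r f. (\<Sum>i<n. (f i)^2) = 1 \<and> (\<forall>i<n. (\<Sum>j<n. Y $$ (i,j) * f j) = r * f i)"
proof -
  obtain r where "eigenvalue Y r" using sym_real_eigval[OF assms] by blast
  then obtain v where ev: "eigenvector Y v r" unfolding eigenvalue_def by blast
  then have v: "v \<in> carrier_vec n" and v0: "v \<noteq> 0\<^sub>v n" and Yv: "Y *\<^sub>v v = r \<cdot>\<^sub>v v"
    using Y unfolding eigenvector_def by auto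
  have "\<exists>i<n. v $ i \<noteq> 0" using v v0 by (metis eq_vecI index_zero_vec(1) index_zero_vec(2) carrier_vecD)
  then obtain i0 where i0: "i0 < n" "v $ i0 \<noteq> 0" by blast
  define N where "N = (\<Sum>i<n. (v $ i)^2)"
  have "N \<ge> (v $ i0)^2" unfolding N_def by (rule member_le_sum) (use i0 in auto)
  moreover have "(v $ i0)^2 > 0" using i0 by simp
  ultimately have Npos: "N > 0" by linarith
  define f where "f i = v $ i / sqrt N" for i
  have "(\<Sum>i<n. (f i)^2) = (\<Sum>i<n. (v $ i)^2) / N"
    unfolding f_def using Npos by (simp add: power_divide sum_divide_distrib)
  also have "\<dots> = 1" using Npos unfolding N_def by simp
  finally have f1: "(\<Sum>i<n. (f i)^2) = 1" .
  have "\<forall>i<n. (\<Sum>j<n. Y $$ (i,j) * f j) = r * f i"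
  proof (intro allI impI)
    fix i assume i: "i < n"
    have "(\<Sum>j<n. Y $$ (i,j) * v $ j) = r * v $ i"
      using mult_vec_entry[OF Y v i] Yv i v by simp
    then show "(\<Sum>j<n. Y $$ (i,j) * f j) = r * f i"
      unfolding f_def by (simp add: sum_divide_distrib[symmetric] mult.assoc times_divide_eq_right)
  qed
  with f1 show ?thesis by blast
qed


lemma sum_sq_zero:
  fixes w :: "nat \<Rightarrow> real"
  assumes "(\<Sum>l<m. (w l)^2) = 0" "i < m" shows "w i = 0"
proof -
  have "\<forall>l\<in>{..<m}. (w l)^2 = 0"
    using sum_nonneg_eq_0_iff[of "{..<m}" "\<lambda>l. (w l)^2"] assms(1) by simp
  then show ?thesis using assms(2) by simp
qed

lemma times_if0: "(x::real) * (if P then y else 0) = (if P then x * y else 0)" by simp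
lemma delta_mult: "(if P then 1 else 0) * (x::real) = (if P then x else 0)" by simp
lemma mult_delta: "(x::real) * (if P then 1 else 0) = (if P then x else 0)" by simp

lemma sum_swap_mult:
  fixes p :: "'b \<Rightarrow> real"
  shows "(\<Sum>a\<in>A. (\<Sum>b\<in>B. p b * q b a) * f a) = (\<Sum>b\<in>B. p b * (\<Sum>a\<in>A. q b a * f a))"
  by (simp add: sum_distrib_left sum_distrib_right mult.assoc sum.swap[of _ A])

definition hh :: "nat \<Rightarrow> (nat \<Rightarrow> real) \<Rightarrow> real mat" where
  "hh m w = mat m m (\<lambda>(i,j). (if i = j then 1 else 0) - 2 / (\<Sum>l<m. (w l)^2) * w i * w j)"

lemma hh_carrier[simp]: "hh m w \<in> carrier_mat m m" by (simp add: hh_def)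

lemma hh_sym: "transpose_mat (hh m w) = hh m w"
  by (rule eq_matI) (auto simp: hh_def)

lemma hh_sq: "hh m w * hh m w = 1\<^sub>m m"
proof (rule eq_matI)
  fix i j assume "i < dim_row (1\<^sub>m m)" "j < dim_col (1\<^sub>m m)"
  then have i: "i < m" and j: "j < m" by auto
  define q where "q = (\<Sum>l<m. (w l)^2)"
  define c where "c = 2 / q"
  have "(hh m w * hh m w) $$ (i,j) = (\<Sum>l<m. ((if i = l then 1 else 0) - c * w i * w l) *
      ((if l = j then 1 else 0) - c * w l * w j))"
    using i j by (subst mult_entry[OF hh_carrier hh_carrier i j]) (simp add: hh_def c_def q_def)
  also have "\<dots> = (\<Sum>l<m. (if i = l then 1 else 0) * (if l = j then 1 else 0))
      - (\<Sum>l<m. (if i = l then 1 else 0) * (c * w l * w j))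
      - (\<Sum>l<m. (c * w i * w l) * (if l = j then 1 else 0))
      + (\<Sum>l<m. (c * w i * w l) * (c * w l * w j))"
    by (simp add: algebra_simps sum.distrib sum_subtractf)
  also have "\<dots> = (if i = j then 1 else 0) - c * w i * w j - c * w i * w j + c * c * w i * w j * q"
  proof -
    have s1: "(\<Sum>l<m. (if i = l then 1 else 0) * (if l = j then 1 else (0::real))) = (if i = j then 1 else 0)"
      using i by (simp add: delta_mult sum.delta)
    have s2: "(\<Sum>l<m. (if i = l then 1 else 0) * (c * w l * w j)) = c * w i * w j"
      using i by (simp add: delta_mult sum.delta)
    have s3: "(\<Sum>l<m. (c * w i * w l) * (if l = j then 1 else 0)) = c * w i * w j"
      using j by (simp add: mult_delta sum.delta')
    have s4: "(\<Sum>l<m. (c * w i * w l) * (c * w l * w j)) = c * c * w i * w j * q"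
      unfolding q_def sum_distrib_left by (rule sum.cong) (auto simp: power2_eq_square)
    show ?thesis using s1 s2 s3 s4 by simp
  qed
  also have "\<dots> = (if i = j then 1 else 0)"
  proof (cases "q = 0")
    case True
    then have "w i = 0" using sum_sq_zero[of w m i] i unfolding q_def by simp
    then show ?thesis by simp
  next
    case False
    then have "c * c * q = 2 * c" unfolding c_def by (simp add: field_simps power2_eq_square)
    then have "c * c * w i * w j * q = 2 * c * w i * w j" by (metis mult.commute mult.left_commute)
    then show ?thesis by simp
  qed
  finally show "(hh m w * hh m w) $$ (i,j) = 1\<^sub>m m $$ (i,j)" using i j by simp
qed (auto simp: hh_def)

lemma hh_col0:
  fixes f :: "nat \<Rightarrow> real"
  assumes f1: "(\<Sum>i<m. (f i)^2) = 1" and a: "a < m"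
  defines "w \<equiv> \<lambda>i. f i - (if i = 0 then 1 else 0)"
  shows "hh m w $$ (a, 0) = f a"
proof -
  have m: "0 < m" using a by simp
  define q where "q = (\<Sum>l<m. (w l)^2)"
  have d: "(\<Sum>l<m. (if l = 0 then f l else 0)) = f 0" "(\<Sum>l<m. (if l = 0 then 1 else 0::real)) = 1"
    using m by (simp_all add: sum.delta')
  have wl: "(w l)^2 = (f l)^2 - 2 * (if l = 0 then f l else 0) + (if l = 0 then 1 else 0)" for l
    by (simp add: w_def power2_eq_square algebra_simps)
  have "q = (\<Sum>l<m. (f l)^2) - 2 * (\<Sum>l<m. (if l = 0 then f l else 0)) + (\<Sum>l<m. (if l = 0 then 1 else 0))"
    unfolding q_def wl by (simp only: sum.distrib sum_subtractf sum_distrib_left)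
  also have "\<dots> = 2 - 2 * f 0" using f1 d by simp
  finally have q: "q = - 2 * w 0" unfolding w_def by simp
  show ?thesis
  proof (cases "q = 0")
    case True
    then have "w a = 0" using sum_sq_zero[of w m a] a unfolding q_def by simp
    moreover have "w 0 = 0" using True q by simp
    ultimately show ?thesis using a unfolding hh_def q_def[symmetric] by (auto simp: w_def split: if_splits)
  next
    case False
    then have "2 / q * w 0 = -1" using q by (simp add: field_simps)
    then have "2 / q * w a * w 0 = - w a" by (metis mult.commute mult_minus1 mult.left_commute)
    then show ?thesis using a m unfolding hh_def q_def[symmetric] by (simp add: w_def)
  qed
qed


lemma spectral_unsorted:
  fixes Y :: "real mat"
  assumes "Y \<in> carrier_mat n n" "transpose_mat Y = Y"
  shows "\<exists>U \<mu>. orth n U \<and> Y = U * dg n \<mu> * transpose_mat U"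
  using assms
proof (induction n arbitrary: Y)
  case 0
  have "Y = 1\<^sub>m 0 * dg 0 (\<lambda>_. 0) * transpose_mat (1\<^sub>m 0)"
    using 0 by (intro eq_matI) auto
  moreover have "orth 0 (1\<^sub>m 0)" unfolding orth_def by auto
  ultimately show ?case by blast
next
  case (Suc n)
  note Y = Suc.prems(1) and sym = Suc.prems(2)
  obtain r f where f1: "(\<Sum>i<Suc n. (f i)^2) = 1"
    and ev: "\<forall>i<Suc n. (\<Sum>j<Suc n. Y $$ (i,j) * f j) = r * f i"
    using real_eigvec_unit[OF Y sym] by auto
  define w where "w = (\<lambda>i. f i - (if i = 0 then 1 else (0::real)))"
  define H where "H = hh (Suc n) w"
  have H: "H \<in> carrier_mat (Suc n) (Suc n)" unfolding H_def by simp
  have Hs: "transpose_mat H = H" unfolding H_def by (rule hh_sym)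
  have HH: "H * H = 1\<^sub>m (Suc n)" unfolding H_def by (rule hh_sq)
  have H0: "H $$ (a, 0) = f a" if "a < Suc n" for a
    unfolding H_def w_def by (rule hh_col0[OF f1 that])
  define Z where "Z = H * Y * H"
  have Z: "Z \<in> carrier_mat (Suc n) (Suc n)" unfolding Z_def using H Y by simp
  have Zs: "transpose_mat Z = Z"
  proof -
    have HY: "H * Y \<in> carrier_mat (Suc n) (Suc n)" using H Y by simp
    have "transpose_mat Z = transpose_mat H * transpose_mat (H * Y)"
      unfolding Z_def by (rule transpose_mult[OF HY H])
    also have "\<dots> = H * (Y * H)" using transpose_mult[OF H Y] Hs sym by simp
    finally show ?thesis unfolding Z_def using H Y by simp
  qed
  have Zcol: "Z $$ (i, 0) = (if i = 0 then r else 0)" if i: "i < Suc n" for i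
  proof -
    have HY: "H * Y \<in> carrier_mat (Suc n) (Suc n)" using H Y by simp
    have "Z $$ (i,0) = (\<Sum>a<Suc n. (H * Y) $$ (i,a) * H $$ (a,0))"
      unfolding Z_def by (rule mult_entry[OF HY H i]) simp
    also have "\<dots> = (\<Sum>a<Suc n. (\<Sum>b<Suc n. H $$ (i,b) * Y $$ (b,a)) * f a)"
      by (rule sum.cong[OF refl]) (simp add: H0 mult_entry[OF H Y i] del: index_mult_mat)
    also have "\<dots> = (\<Sum>b<Suc n. H $$ (i,b) * (\<Sum>a<Suc n. Y $$ (b,a) * f a))"
      by (rule sum_swap_mult)
    also have "\<dots> = (\<Sum>b<Suc n. H $$ (i,b) * (r * H $$ (b,0)))"
      by (rule sum.cong[OF refl]) (use ev H0 in \<open>simp del: sum.lessThan_Suc\<close>)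
    also have "\<dots> = r * (H * H) $$ (i,0)"
      by (simp add: mult_entry[OF H H i] sum_distrib_left algebra_simps del: index_mult_mat)
    also have "\<dots> = (if i = 0 then r else 0)" using HH i by simp
    finally show ?thesis .
  qed
  have Zrow: "Z $$ (0, j) = (if j = 0 then r else 0)" if j: "j < Suc n" for j
  proof -
    have "Z $$ (0, j) = transpose_mat Z $$ (j, 0)" using Z j by simp
    then show ?thesis using Zs Zcol[OF j] by simp
  qed
  define Y' where "Y' = mat n n (\<lambda>(i,j). Z $$ (Suc i, Suc j))"
  have Y': "Y' \<in> carrier_mat n n" unfolding Y'_def by simp
  have Y's: "transpose_mat Y' = Y'"
  proof (rule eq_matI)
    fix i j assume "i < dim_row Y'" "j < dim_col Y'"
    then have i: "i < n" and j: "j < n" by (auto simp: Y'_def)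
    have "Z $$ (Suc j, Suc i) = transpose_mat Z $$ (Suc i, Suc j)" using Z i j by simp
    then show "transpose_mat Y' $$ (i,j) = Y' $$ (i,j)" using i j Zs by (simp add: Y'_def)
  qed (auto simp: Y'_def)
  obtain U' \<mu>' where U': "orth n U'" and dec: "Y' = U' * dg n \<mu>' * transpose_mat U'"
    using Suc.IH[OF Y' Y's] by blast
  have U'c: "U' \<in> carrier_mat n n" using U' unfolding orth_def by simp
  define E where "E = ext 1 n U'"
  define U where "U = H * E"
  define \<mu> where "\<mu> = (\<lambda>i. if i = 0 then r else \<mu>' (i - 1))"
  have E: "E \<in> carrier_mat (Suc n) (Suc n)" unfolding E_def by simp
  have Et: "transpose_mat E = ext 1 n (transpose_mat U')" unfolding E_def by (rule ext_transpose[OF U'c])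
  have EtE: "transpose_mat E * E = 1\<^sub>m (Suc n)"
    unfolding Et E_def using ext_mult[of "transpose_mat U'" n U' 1 1] U'c U' ext_one
    unfolding orth_def by (simp add: ext_transpose[OF U'c])
  have Uc: "U \<in> carrier_mat (Suc n) (Suc n)" unfolding U_def using H E by simp
  have "transpose_mat U * U = transpose_mat E * (H * H) * E"
    unfolding U_def using H E Hs
    by (simp add: transpose_mult[of _ "Suc n" "Suc n"] sq_assoc[of _ "Suc n"])
  also have "\<dots> = 1\<^sub>m (Suc n)" using HH EtE E by simp
  finally have orthU: "orth (Suc n) U" unfolding orth_def using Uc by simp
  have EDE: "E * dg (Suc n) \<mu> * transpose_mat E = Z"
  proof -
    have "dg (Suc n) \<mu> = ext r n (dg n \<mu>')" unfolding ext_dg \<mu>_def by simp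
    then have "E * dg (Suc n) \<mu> * transpose_mat E = ext r n (U' * dg n \<mu>' * transpose_mat U')"
      unfolding E_def using U'c ext_mult by (simp add: ext_transpose[OF U'c])
    also have "\<dots> = ext r n Y'" using dec by simp
    also have "\<dots> = Z"
    proof (rule eq_matI)
      fix i j assume "i < dim_row Z" "j < dim_col Z"
      then have i: "i < Suc n" and j: "j < Suc n" using Z by auto
      show "ext r n Y' $$ (i, j) = Z $$ (i, j)"
      proof (cases "i = 0 \<or> j = 0")
        case True
        then show ?thesis using Zcol Zrow i j by (auto simp: ext_def)
      next
        case False
        then obtain i' j' where "i = Suc i'" "j = Suc j'" by (metis not0_implies_Suc)
        then show ?thesis using i j by (simp add: ext_def Y'_def)
      qed
    qed (use Z in \<open>auto simp: ext_def\<close>)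
    finally show ?thesis .
  qed
  have "U * dg (Suc n) \<mu> * transpose_mat U = H * (E * dg (Suc n) \<mu> * transpose_mat E) * H"
    unfolding U_def using H E Hs
    by (simp add: transpose_mult[of _ "Suc n" "Suc n"] sq_assoc[of _ "Suc n"])
  also have "\<dots> = (H * H) * Y * (H * H)" unfolding EDE Z_def using H Y
    by (simp add: sq_assoc[of _ "Suc n"])
  also have "\<dots> = Y" using HH Y by simp
  finally show ?case using orthU by metis
qed


lemma prod_list_perm:
  fixes f :: "'a \<Rightarrow> 'b::comm_monoid_mult"
  assumes "mset xs = mset ys" shows "(\<Prod>x\<leftarrow>xs. f x) = (\<Prod>x\<leftarrow>ys. f x)"
proof -
  have "(\<Prod>x\<leftarrow>xs. f x) = prod_mset (mset (map f xs))" by (rule prod_mset_prod_list[symmetric])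
  also have "mset (map f xs) = mset (map f ys)" using assms by simp
  also have "prod_mset (mset (map f ys)) = (\<Prod>x\<leftarrow>ys. f x)" by (rule prod_mset_prod_list)
  finally show ?thesis .
qed

lemma lin_prod_mset:
  fixes ys zs :: "'a::idom list"
  assumes "(\<Prod>y\<leftarrow>ys. [:-y,1:]) = (\<Prod>z\<leftarrow>zs. [:-z,1:])"
  shows "mset ys = mset zs"
  using assms
proof (induction ys arbitrary: zs)
  case Nil
  show ?case
  proof (cases zs)
    case (Cons z zs')
    have "poly (\<Prod>z\<leftarrow>zs. [:-z,1:]) z = 0" unfolding Cons by (simp only: list.map prod_list.Cons poly_mult) simp
    moreover have "poly (\<Prod>z\<leftarrow>zs. [:-z,1:]) z = 1" unfolding Nil[symmetric] by simp
    ultimately show ?thesis by simp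
  qed simp
next
  case (Cons y ys)
  have e1: "(\<Prod>z\<leftarrow>zs. [:-z,1:]) = [:-y,1:] * (\<Prod>z\<leftarrow>ys. [:-z,1:])"
    using Cons.prems by (simp only: list.map prod_list.Cons)
  have "poly (\<Prod>z\<leftarrow>zs. [:-z,1:]) y = 0" unfolding e1 by (simp only: poly_mult) simp
  then have yz: "y \<in> set zs" by (simp add: poly_prod_list_zero_iff)
  then have m: "mset zs = mset (y # remove1 y zs)" by simp
  have e2: "(\<Prod>z\<leftarrow>zs. [:-z,1:]) = [:-y,1:] * (\<Prod>z\<leftarrow>remove1 y zs. [:-z,1:])"
    using prod_list_perm[OF m, of "\<lambda>z. [:-z,1:]"] by (simp only: list.map prod_list.Cons)
  have "[:-y,1:] * (\<Prod>z\<leftarrow>ys. [:-z,1:]) = [:-y,1:] * (\<Prod>z\<leftarrow>remove1 y zs. [:-z,1:])"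
    using e1 e2 by (rule trans[OF sym])
  moreover have "[:-y,1:] \<noteq> 0" by simp
  ultimately have "(\<Prod>z\<leftarrow>ys. [:-z,1:]) = (\<Prod>z\<leftarrow>remove1 y zs. [:-z,1:])"
    by (rule mult_left_cancel[THEN iffD1, rotated])
  then have "mset ys = mset (remove1 y zs)" by (rule Cons.IH)
  then have "mset (y # ys) = mset (y # remove1 y zs)" by (simp only: mset.simps)
  from this m show ?case by (rule trans[OF _ sym])
qed

lemma triple_entry:
  assumes U: "U \<in> carrier_mat n n" and i: "i < n" and j: "j < n"
  shows "(U * dg n f * transpose_mat U) $$ (i,j) = (\<Sum>l<n. U $$ (i,l) * f l * U $$ (j,l))"
proof -
  have UD: "U * dg n f \<in> carrier_mat n n" by (rule sq_mult_carrier[OF U dg_carrier])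
  have Ut: "transpose_mat U \<in> carrier_mat n n" using U by (rule sq_tr_carrier)
  have "(U * dg n f * transpose_mat U) $$ (i,j) = (\<Sum>l<n. (U * dg n f) $$ (i,l) * transpose_mat U $$ (l,j))"
    by (rule mult_entry[OF UD Ut i j])
  also have "\<dots> = (\<Sum>l<n. U $$ (i,l) * f l * U $$ (j,l))"
  proof (rule sum.cong[OF refl])
    fix l assume l: "l \<in> {..<n}"
    have "(U * dg n f) $$ (i,l) = (\<Sum>m<n. U $$ (i,m) * dg n f $$ (m,l))"
      using l by (intro mult_entry[OF U dg_carrier i]) simp
    also have "\<dots> = (\<Sum>m<n. if m = l then U $$ (i,m) * f l else 0)"
      using l by (intro sum.cong refl) (auto simp: dg_def)
    also have "\<dots> = U $$ (i,l) * f l" using l by (simp add: sum.delta')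
    finally show "(U * dg n f) $$ (i,l) * transpose_mat U $$ (l,j) = U $$ (i,l) * f l * U $$ (j,l)"
      using U l j by simp
  qed
  finally show ?thesis .
qed

lemma char_poly_orth_dg:
  assumes U: "orth n U"
  shows "char_poly (U * dg n f * transpose_mat U) = (\<Prod>a\<leftarrow>map f [0..<n]. [:-a,1:])"
proof -
  have Uc: "U \<in> carrier_mat n n" using U orth_def by auto
  have "similar_mat_wit (U * dg n f * transpose_mat U) (dg n f) U (transpose_mat U)"
    by (rule similar_mat_witI[of _ _ n]) (use U orth_right[OF U] Uc in \<open>auto simp: orth_def\<close>)
  then have "similar_mat (U * dg n f * transpose_mat U) (dg n f)" unfolding similar_mat_def by blast
  then have "char_poly (U * dg n f * transpose_mat U) = char_poly (dg n f)" by (rule char_poly_similar)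
  also have "\<dots> = (\<Prod>a\<leftarrow>diag_mat (dg n f). [:-a,1:])"
    by (rule char_poly_upper_triangular[of _ n]) (auto simp: upper_triangular_def dg_def)
  also have "diag_mat (dg n f) = map f [0..<n]" by (simp add: diag_mat_def dg_def)
  finally show ?thesis .
qed

lemma eigs_orth_dg:
  assumes U: "orth n U" and L: "sorted (rev L)" "mset L = mset (map f [0..<n])"
  shows "eigs (U * dg n f * transpose_mat U) = L"
proof -
  have Uc: "U \<in> carrier_mat n n" using U orth_def by auto
  let ?Y = "U * dg n f * transpose_mat U"
  have dim: "dim_row ?Y = n" using Uc by simp
  have cp: "char_poly ?Y = (\<Prod>a\<leftarrow>L. [:-a,1:])"
    unfolding char_poly_orth_dg[OF U] using prod_list_perm[OF L(2)[symmetric]] by simp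
  have len: "length L = n" using L(2) by (metis length_map length_upt minus_nat.diff_0 size_mset)
  show ?thesis unfolding eigs_def
  proof (rule the_equality)
    show "length L = dim_row ?Y \<and> sorted (rev L) \<and> char_poly ?Y = (\<Prod>y\<leftarrow>L. [:- y, 1:])"
      using len dim L cp by simp
  next
    fix ys assume ys: "length ys = dim_row ?Y \<and> sorted (rev ys) \<and> char_poly ?Y = (\<Prod>y\<leftarrow>ys. [:- y, 1:])"
    then have "(\<Prod>y\<leftarrow>ys. [:- y, 1:]) = (\<Prod>y\<leftarrow>L. [:- y, 1:])" using cp by simp
    then have "mset ys = mset L" by (rule lin_prod_mset)
    then have "mset (rev L) = mset (rev ys)" by simp
    then have "sort (rev ys) = rev L" using L(1) by (rule properties_for_sort)
    moreover have "sort (rev ys) = rev ys" using ys by (simp add: sorted_sort_id)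
    ultimately have "rev ys = rev L" by simp
    then show "ys = L" by simp
  qed
qed

lemma spectral:
  fixes Y :: "real mat"
  assumes Y: "Y \<in> carrier_mat n n" and sym: "transpose_mat Y = Y"
  shows "\<exists>U. orth n U \<and> Y = U * dg n (\<lambda>i. eigs Y ! i) * transpose_mat U \<and> sorted (rev (eigs Y))
    \<and> length (eigs Y) = n"
proof -
  obtain U \<mu> where U: "orth n U" and dec: "Y = U * dg n \<mu> * transpose_mat U"
    using spectral_unsorted[OF Y sym] by blast
  have Uc: "U \<in> carrier_mat n n" using U orth_def by auto
  define L where "L = map \<mu> [0..<n]"
  define L' where "L' = rev (sort L)"
  have mL: "mset L' = mset L" unfolding L'_def by simp
  obtain p where p: "p permutes {..<length L}" and pl: "permute_list p L = L'"
    using mset_eq_permutation[OF mL] by blast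
  have lenL: "length L = n" unfolding L_def by simp
  have p': "p permutes {..<n}" using p lenL by simp
  have pin: "p i < n" if "i < n" for i using permutes_in_image[OF p'] that by simp
  have L'i: "L' ! i = \<mu> (p i)" if "i < n" for i
    using permute_list_nth[OF p, of i] that lenL pl pin[OF that] unfolding L_def by simp
  define U' where "U' = mat n n (\<lambda>(i,j). U $$ (i, p j))"
  define \<mu>' where "\<mu>' = (\<lambda>i. \<mu> (p i))"
  have U'c: "U' \<in> carrier_mat n n" unfolding U'_def by simp
  have inj: "p i = p j \<longleftrightarrow> i = j" for i j using permutes_inj[OF p'] by (auto dest: injD)
  have orthU': "orth n U'"
    unfolding orth_def
  proof (intro conjI U'c eq_matI)
    fix i j assume "i < dim_row (1\<^sub>m n)" "j < dim_col (1\<^sub>m n)"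
    then have i: "i < n" and j: "j < n" by auto
    have "(transpose_mat U' * U') $$ (i,j) = (\<Sum>l<n. U $$ (l, p i) * U $$ (l, p j))"
      using i j U'c by (subst mult_entry[OF sq_tr_carrier[OF U'c] U'c i j]) (simp add: U'_def)
    also have "\<dots> = (transpose_mat U * U) $$ (p i, p j)"
      using pin[OF i] pin[OF j] Uc
      by (subst mult_entry[OF sq_tr_carrier[OF Uc] Uc]) simp_all
    also have "\<dots> = (if i = j then 1 else 0)" using U pin[OF i] pin[OF j] inj unfolding orth_def by simp
    finally show "(transpose_mat U' * U') $$ (i,j) = 1\<^sub>m n $$ (i,j)" using i j by simp
  qed (auto simp: U'_def)
  have dec': "Y = U' * dg n \<mu>' * transpose_mat U'"
  proof (rule eq_matI)
    fix i j assume "i < dim_row (U' * dg n \<mu>' * transpose_mat U')" "j < dim_col (U' * dg n \<mu>' * transpose_mat U')"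
    then have i: "i < n" and j: "j < n" using U'c by auto
    have "(U' * dg n \<mu>' * transpose_mat U') $$ (i,j) = (\<Sum>l<n. U $$ (i,p l) * \<mu> (p l) * U $$ (j,p l))"
      using triple_entry[OF U'c i j] i j by (simp add: U'_def \<mu>'_def)
    also have "\<dots> = (\<Sum>l<n. U $$ (i,l) * \<mu> l * U $$ (j,l))"
      using sum.permute[OF p', of "\<lambda>l. U $$ (i,l) * \<mu> l * U $$ (j,l)"] by (simp add: comp_def)
    also have "\<dots> = Y $$ (i,j)" using triple_entry[OF Uc i j] dec by simp
    finally show "Y $$ (i,j) = (U' * dg n \<mu>' * transpose_mat U') $$ (i,j)" by simp
  qed (use Y U'c in auto)
  have mapL': "map \<mu>' [0..<n] = L'"
    by (rule nth_equalityI) (use lenL L'i in \<open>simp_all add: \<mu>'_def L'_def\<close>)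
  have "eigs Y = L'"
    unfolding dec' by (rule eigs_orth_dg[OF orthU']) (simp_all add: L'_def mapL')
  then have "dg n \<mu>' = dg n (\<lambda>i. eigs Y ! i)" using L'i unfolding dg_def \<mu>'_def by (intro eq_matI) auto
  moreover have "sorted (rev (eigs Y))" "length (eigs Y) = n" using \<open>eigs Y = L'\<close> lenL by (simp_all add: L'_def)
  ultimately show ?thesis using dec' orthU' by metis
qed

lemma weight_lemma:
  fixes f q :: "nat \<Rightarrow> real"
  assumes sorted: "\<And>i j. i \<le> j \<Longrightarrow> j < n \<Longrightarrow> f j \<le> f i"
    and q: "\<And>l. l < n \<Longrightarrow> 0 \<le> q l \<and> q l \<le> 1"
    and sq: "(\<Sum>l<n. q l) = real m" and mn: "m \<le> n"
  shows "(\<Sum>l<n. f l * q l) \<le> (\<Sum>l<m. f l)"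
proof (cases "n = 0")
  case True
  then show ?thesis using mn by simp
next
  case False
  define \<theta> where "\<theta> = f (min m (n - 1))"
  have hi: "f l \<ge> \<theta>" if "l < m" for l using sorted[of l "min m (n-1)"] that mn False unfolding \<theta>_def by auto
  have lo: "f l \<le> \<theta>" if "m \<le> l" "l < n" for l using sorted[of "min m (n-1)" l] that unfolding \<theta>_def by auto
  have split: "{..<n} = {..<m} \<union> {m..<n}" using mn by auto
  have disj: "{..<m} \<inter> {m..<n} = {}" by auto
  have S: "(\<Sum>l<n. g l) = (\<Sum>l<m. g l) + (\<Sum>l\<in>{m..<n}. g l)" for g :: "nat \<Rightarrow> real"
    unfolding split by (rule sum.union_disjoint) (use disj in auto)
  have "(\<Sum>l<m. f l) - (\<Sum>l<n. f l * q l) = (\<Sum>l<m. f l * (1 - q l)) - (\<Sum>l\<in>{m..<n}. f l * q l)"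
    unfolding S[of "\<lambda>l. f l * q l"] by (simp add: algebra_simps sum_subtractf)
  also have "\<dots> \<ge> (\<Sum>l<m. \<theta> * (1 - q l)) - (\<Sum>l\<in>{m..<n}. \<theta> * q l)"
  proof -
    have "(\<Sum>l<m. f l * (1 - q l)) \<ge> (\<Sum>l<m. \<theta> * (1 - q l))"
      by (rule sum_mono) (use hi q mn in \<open>auto intro!: mult_right_mono\<close>)
    moreover have "(\<Sum>l\<in>{m..<n}. f l * q l) \<le> (\<Sum>l\<in>{m..<n}. \<theta> * q l)"
      by (rule sum_mono) (use lo q in \<open>auto intro!: mult_right_mono\<close>)
    ultimately show ?thesis by linarith
  qed
  also have "(\<Sum>l<m. \<theta> * (1 - q l)) - (\<Sum>l\<in>{m..<n}. \<theta> * q l) = \<theta> * (real m - (\<Sum>l<n. q l))"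
    unfolding S[of q] by (simp add: algebra_simps sum_subtractf sum_distrib_left)
  also have "\<dots> = 0" using sq by simp
  finally show ?thesis by simp
qed

lemma abel_lemma:
  fixes c y \<mu> :: "nat \<Rightarrow> real"
  assumes c: "\<And>i j. i \<le> j \<Longrightarrow> j < k \<Longrightarrow> c j \<le> c i" and c0: "\<And>i. i < k \<Longrightarrow> 0 \<le> c i"
    and part: "\<And>j. j \<le> k \<Longrightarrow> (\<Sum>i<j. y i) \<le> (\<Sum>i<j. \<mu> i)"
  shows "(\<Sum>i<k. c i * y i) \<le> (\<Sum>i<k. c i * \<mu> i)"
proof -
  define d where "d i = \<mu> i - y i" for i
  have D: "(\<Sum>i<j. d i) \<ge> 0" if "j \<le> k" for j using part[OF that] unfolding d_def by (simp add: sum_subtractf)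
  have main: "(\<Sum>i<Suc j. c i * d i) \<ge> c j * (\<Sum>i<Suc j. d i)" if "Suc j \<le> k" for j
    using that
  proof (induction j)
    case 0
    then show ?case by simp
  next
    case (Suc j)
    have e: "(\<Sum>i<Suc (Suc j). c i * d i) = (\<Sum>i<Suc j. c i * d i) + c (Suc j) * d (Suc j)" by simp
    have i1: "(\<Sum>i<Suc j. c i * d i) \<ge> c j * (\<Sum>i<Suc j. d i)" using Suc by simp
    have i2: "c j * (\<Sum>i<Suc j. d i) \<ge> c (Suc j) * (\<Sum>i<Suc j. d i)"
      by (rule mult_right_mono) (use c[of j "Suc j"] D[of "Suc j"] Suc.prems in auto)
    have "c (Suc j) * (\<Sum>i<Suc (Suc j). d i) = c (Suc j) * (\<Sum>i<Suc j. d i) + c (Suc j) * d (Suc j)"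
      by (simp add: algebra_simps)
    then show ?case using e i1 i2 by linarith
  qed
  have "(\<Sum>i<k. c i * d i) \<ge> 0"
  proof (cases k)
    case 0 then show ?thesis by simp
  next
    case (Suc j)
    then have "(\<Sum>i<k. c i * d i) \<ge> c j * (\<Sum>i<k. d i)" using main[of j] by simp
    moreover have "c j * (\<Sum>i<k. d i) \<ge> 0" using c0[of j] D[of k] Suc by simp
    ultimately show ?thesis by linarith
  qed
  then show ?thesis unfolding d_def by (simp add: algebra_simps sum_subtractf)
qed


definition qf :: "nat \<Rightarrow> real mat \<Rightarrow> (nat \<Rightarrow> real) \<Rightarrow> real" where
  "qf n Y z = (\<Sum>a<n. \<Sum>b<n. z a * Y $$ (a,b) * z b)"

lemma orth_cols: assumes "orth n U" "i < n" "j < n"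
  shows "(\<Sum>a<n. U $$ (a,i) * U $$ (a,j)) = (if i = j then 1 else 0)"
proof -
  have Uc: "U \<in> carrier_mat n n" using assms orth_def by auto
  have "(transpose_mat U * U) $$ (i,j) = (\<Sum>a<n. U $$ (a,i) * U $$ (a,j))"
    using assms Uc by (subst mult_entry[OF sq_tr_carrier[OF Uc] Uc]) auto
  then show ?thesis using assms unfolding orth_def by simp
qed

lemma orth_rows: assumes "orth n U" "a < n" "b < n"
  shows "(\<Sum>l<n. U $$ (a,l) * U $$ (b,l)) = (if a = b then 1 else 0)"
proof -
  have Uc: "U \<in> carrier_mat n n" using assms orth_def by auto
  have "(U * transpose_mat U) $$ (a,b) = (\<Sum>l<n. U $$ (a,l) * U $$ (b,l))"
    using assms Uc by (subst mult_entry[OF Uc sq_tr_carrier[OF Uc]]) auto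
  then show ?thesis using assms orth_right[OF assms(1)] by simp
qed

lemma sq_sum_expand: "(\<Sum>a\<in>A. g a :: real)^2 = (\<Sum>a\<in>A. \<Sum>b\<in>A. g a * g b)"
  by (simp add: power2_eq_square sum_product)

lemma sum_swap3: "(\<Sum>i\<in>I. \<Sum>a\<in>A. \<Sum>b\<in>B. f i a b) = (\<Sum>a\<in>A. \<Sum>b\<in>B. \<Sum>i\<in>I. (f i a b :: real))"
  by (subst sum.swap) (rule sum.cong[OF refl], rule sum.swap)

lemma parseval:
  assumes Z: "orth n Z"
  shows "(\<Sum>i<n. (\<Sum>a<n. Z $$ (a,i) * y a)^2) = (\<Sum>a<n. (y a)^2)"
proof -
  have "(\<Sum>i<n. (\<Sum>a<n. Z $$ (a,i) * y a)^2) = (\<Sum>i<n. \<Sum>a<n. \<Sum>b<n. y a * y b * (Z $$ (a,i) * Z $$ (b,i)))"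
    unfolding sq_sum_expand by (simp add: algebra_simps)
  also have "\<dots> = (\<Sum>a<n. \<Sum>b<n. y a * y b * (\<Sum>i<n. Z $$ (a,i) * Z $$ (b,i)))"
    unfolding sum_distrib_left by (rule sum_swap3)
  also have "\<dots> = (\<Sum>a<n. \<Sum>b<n. if a = b then y a * y b else 0)"
    by (intro sum.cong refl) (simp add: orth_rows[OF Z])
  also have "\<dots> = (\<Sum>a<n. (y a)^2)" by (simp add: power2_eq_square)
  finally show ?thesis .
qed

lemma qf_dec:
  assumes U: "U \<in> carrier_mat n n"
  shows "qf n (U * dg n \<mu> * transpose_mat U) z = (\<Sum>l<n. \<mu> l * (\<Sum>a<n. U $$ (a,l) * z a)^2)"
proof -
  have "qf n (U * dg n \<mu> * transpose_mat U) z = (\<Sum>a<n. \<Sum>b<n. z a * (\<Sum>l<n. U $$ (a,l) * \<mu> l * U $$ (b,l)) * z b)"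
    unfolding qf_def by (intro sum.cong refl) (simp add: triple_entry[OF U])
  also have "\<dots> = (\<Sum>a<n. \<Sum>b<n. \<Sum>l<n. \<mu> l * ((U $$ (a,l) * z a) * (U $$ (b,l) * z b)))"
    by (simp add: sum_distrib_left sum_distrib_right algebra_simps)
  also have "\<dots> = (\<Sum>l<n. \<mu> l * (\<Sum>a<n. \<Sum>b<n. (U $$ (a,l) * z a) * (U $$ (b,l) * z b)))"
    unfolding sum_distrib_left by (rule sum_swap3[symmetric])
  also have "\<dots> = (\<Sum>l<n. \<mu> l * (\<Sum>a<n. U $$ (a,l) * z a)^2)"
    unfolding sq_sum_expand by simp
  finally show ?thesis .
qed

lemma kyfan:
  assumes U: "orth n U" and sorted: "\<And>i j. i \<le> j \<Longrightarrow> j < n \<Longrightarrow> \<mu> j \<le> \<mu> i"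
    and Z: "orth n Z" and mn: "m \<le> n"
  shows "(\<Sum>i<m. qf n (U * dg n \<mu> * transpose_mat U) (\<lambda>a. Z $$ (a,i))) \<le> (\<Sum>l<m. \<mu> l)"
proof -
  have Uc: "U \<in> carrier_mat n n" using U orth_def by auto
  define w where "w i l = (\<Sum>a<n. U $$ (a,l) * Z $$ (a,i))^2" for i l
  define q where "q l = (\<Sum>i<m. w i l)" for l
  have "(\<Sum>i<m. qf n (U * dg n \<mu> * transpose_mat U) (\<lambda>a. Z $$ (a,i))) = (\<Sum>i<m. \<Sum>l<n. \<mu> l * w i l)"
    unfolding qf_dec[OF Uc] w_def by simp
  also have "\<dots> = (\<Sum>l<n. \<mu> l * q l)" unfolding q_def sum_distrib_left by (rule sum.swap)
  also have "\<dots> \<le> (\<Sum>l<m. \<mu> l)"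
  proof (rule weight_lemma[OF sorted _ _ mn])
    fix l assume l: "l < n"
    have "q l \<le> (\<Sum>i<n. w i l)" unfolding q_def
      by (rule sum_mono2) (use mn in \<open>auto simp: w_def\<close>)
    also have "\<dots> = (\<Sum>a<n. (U $$ (a,l))^2)"
      unfolding w_def using parseval[OF Z, of "\<lambda>a. U $$ (a,l)"] by (simp add: mult.commute)
    also have "\<dots> = 1" using orth_cols[OF U l l] by (simp add: power2_eq_square)
    finally show "0 \<le> q l \<and> q l \<le> 1" unfolding q_def w_def by (auto intro: sum_nonneg)
  next
    have "(\<Sum>l<n. q l) = (\<Sum>i<m. \<Sum>l<n. w i l)" unfolding q_def by (rule sum.swap)
    also have "\<dots> = (\<Sum>i<m. 1)"
    proof (rule sum.cong[OF refl])
      fix i assume i: "i \<in> {..<m}"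
      have "(\<Sum>l<n. w i l) = (\<Sum>a<n. (Z $$ (a,i))^2)" unfolding w_def by (rule parseval[OF U])
      also have "\<dots> = 1" using orth_cols[OF Z, of i i] i mn by (simp add: power2_eq_square)
      finally show "(\<Sum>l<n. w i l) = 1" .
    qed
    finally show "(\<Sum>l<n. q l) = real m" by simp
  qed
  finally show ?thesis .
qed

lemma psd_qf: assumes "Y \<in> psd_cone n" shows "qf n Y z \<ge> 0"
proof -
  have Y: "Y \<in> carrier_mat n n" using assms psd_cone_def by auto
  define v where "v = vec n z"
  have v: "v \<in> carrier_vec n" unfolding v_def by simp
  have "v \<bullet> (Y *\<^sub>v v) \<ge> 0" using assms v unfolding psd_cone_def by auto
  moreover have "v \<bullet> (Y *\<^sub>v v) = qf n Y z"
    unfolding qf_def sprod_sum[OF mult_mat_vec_carrier[OF Y v]]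
    by (intro sum.cong refl) (simp add: mult_vec_entry[OF Y v, unfolded v_def] v_def sum_distrib_left mult.assoc)
  ultimately show ?thesis by simp
qed

lemma det_swap_blocks:
  fixes A B :: "real mat"
  assumes A: "A \<in> carrier_mat n n" and B: "B \<in> carrier_mat n n"
  shows "det (x \<cdot>\<^sub>m 1\<^sub>m n - A * B) = det (x \<cdot>\<^sub>m 1\<^sub>m n - B * A)"
proof -
  let ?X = "x \<cdot>\<^sub>m 1\<^sub>m n" and ?I = "1\<^sub>m n :: real mat" and ?O = "0\<^sub>m n n :: real mat"
  define M1 where "M1 = four_block_mat ?X A B ?I"
  define M2 where "M2 = four_block_mat ?I B A ?X"
  define P where "P = four_block_mat ?O ?I ?I ?O"
  have d1: "det M1 = det (?X * ?I - A * B)"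
    unfolding M1_def by (rule det_four_block_mat) (use A B in auto)
  have d2: "det M2 = det (?I * ?X - B * A)"
    unfolding M2_def by (rule det_four_block_mat) (use A B in auto)
  have PM1: "P * M1 = four_block_mat B ?I ?X A"
    unfolding P_def M1_def using A B by (subst mult_four_block_mat[of _ n n _ n _ n]) auto
  have PM1P: "P * M1 * P = M2"
    unfolding PM1 unfolding P_def M2_def using A B by (subst mult_four_block_mat[of _ n n _ n _ n]) auto
  have PP: "P * P = 1\<^sub>m (n + n)"
    unfolding P_def by (subst mult_four_block_mat[of _ n n _ n _ n]) (auto intro!: eq_matI)
  have Pc: "P \<in> carrier_mat (n+n) (n+n)" unfolding P_def by auto
  have M1c: "M1 \<in> carrier_mat (n+n) (n+n)" unfolding M1_def using A B by auto
  have "det M2 = det P * det M1 * det P"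
    unfolding PM1P[symmetric] using Pc M1c by (simp add: det_mult[of _ "n+n"])
  also have "\<dots> = det (P * P) * det M1" using Pc by (simp add: det_mult[of _ "n+n"])
  also have "\<dots> = det M1" unfolding PP by simp
  finally have "det M2 = det M1" .
  then show ?thesis using d1 d2 A B by simp
qed

lemma char_poly_comm:
  fixes A B :: "real mat"
  assumes A: "A \<in> carrier_mat n n" and B: "B \<in> carrier_mat n n"
  shows "char_poly (A * B) = char_poly (B * A)"
proof -
  have AB: "A * B \<in> carrier_mat n n" and BA: "B * A \<in> carrier_mat n n" using A B by auto
  have neg: "- char_matrix M x = x \<cdot>\<^sub>m 1\<^sub>m n - M" if "M \<in> carrier_mat n n" for M :: "real mat" and x
    unfolding char_matrix_def using that by (intro eq_matI) auto
  have "poly (char_poly (A * B)) x = poly (char_poly (B * A)) x" for x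
    unfolding char_poly_matrix[OF AB] char_poly_matrix[OF BA] neg[OF AB] neg[OF BA]
    by (rule det_swap_blocks[OF A B])
  then show ?thesis by (intro poly_ext) simp
qed


lemma sum_01_card:
  fixes y :: "nat \<Rightarrow> real"
  assumes "finite S" "\<And>l. l \<in> S \<Longrightarrow> y l = 0 \<or> y l = 1"
  shows "(\<Sum>l\<in>S. y l) = real (card {l\<in>S. y l = 1})"
proof -
  have "(\<Sum>l\<in>S. y l) = (\<Sum>l\<in>S. if y l = 1 then 1 else 0)"
    using assms(2) by (intro sum.cong refl) fastforce
  also have "\<dots> = real (card (S \<inter> {l. y l = 1}))"
    using assms(1) by (simp add: sum.If_cases)
  also have "S \<inter> {l. y l = 1} = {l\<in>S. y l = 1}" by auto
  finally show ?thesis .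
qed

lemma hypersimplex:
  fixes F :: "(nat \<Rightarrow> real) \<Rightarrow> real" and m r :: nat and L :: real
  defines "H \<equiv> {y. (\<forall>i<m. 0 \<le> y i \<and> y i \<le> 1) \<and> (\<forall>i\<ge>m. y i = 0) \<and> (\<Sum>i<m. y i) = real r}"
  assumes conc: "\<And>y z \<theta>. y \<in> H \<Longrightarrow> z \<in> H \<Longrightarrow> 0 \<le> \<theta> \<Longrightarrow> \<theta> \<le> 1 \<Longrightarrow>
      F (\<lambda>i. \<theta> * y i + (1 - \<theta>) * z i) \<ge> \<theta> * F y + (1 - \<theta>) * F z"
    and vert: "\<And>y. y \<in> H \<Longrightarrow> (\<forall>i<m. y i = 0 \<or> y i = 1) \<Longrightarrow> F y \<ge> L"
  shows "y \<in> H \<Longrightarrow> F y \<ge> L"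
proof (induction "card {i. i < m \<and> 0 < y i \<and> y i < 1}" arbitrary: y rule: less_induct)
  case less
  define fr where "fr y = {i. i < m \<and> 0 < y i \<and> y i < 1}" for y :: "nat \<Rightarrow> real"
  have yH: "y \<in> H" by fact
  then have yb: "\<And>i. i < m \<Longrightarrow> 0 \<le> y i \<and> y i \<le> 1" and yz: "\<And>i. i \<ge> m \<Longrightarrow> y i = 0"
    and ys: "(\<Sum>i<m. y i) = real r" unfolding H_def by auto
  show ?case
  proof (cases "fr y = {}")
    case True
    then have "\<forall>i<m. y i = 0 \<or> y i = 1" using yb unfolding fr_def by fastforce
    then show ?thesis using vert yH by blast
  next
    case False
    then obtain i where i: "i \<in> fr y" by blast
    have "\<exists>j. j \<in> fr y \<and> j \<noteq> i"
    proof (rule ccontr)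
      assume "\<not> ?thesis"
      then have others: "\<And>l. l \<in> {..<m} - {i} \<Longrightarrow> y l = 0 \<or> y l = 1"
        using yb unfolding fr_def by fastforce
      define c where "c = card {l \<in> {..<m} - {i}. y l = 1}"
      have "(\<Sum>l<m. y l) = y i + (\<Sum>l\<in>{..<m} - {i}. y l)"
        using i unfolding fr_def by (simp add: sum.remove)
      also have "(\<Sum>l\<in>{..<m} - {i}. y l) = real c" unfolding c_def by (rule sum_01_card) (use others in auto)
      finally have "y i = real r - real c" using ys by simp
      moreover have "r \<le> c \<or> c + 1 \<le> r" by linarith
      moreover have "0 < y i" "y i < 1" using i unfolding fr_def by auto
      ultimately show False by (auto simp del: of_nat_add simp add: of_nat_le_iff[symmetric])
    qed
    then obtain j where j: "j \<in> fr y" "j \<noteq> i" by blast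
    have im: "i < m" and jm: "j < m" using i j unfolding fr_def by auto
    have yi: "0 < y i" "y i < 1" and yj: "0 < y j" "y j < 1" using i j unfolding fr_def by auto
    define ep where "ep = min (1 - y i) (y j)"
    define em where "em = min (y i) (1 - y j)"
    have ep: "ep > 0" and em: "em > 0" unfolding ep_def em_def using yi yj by auto
    define d where "d l = (if l = i then 1 else if l = j then -1 else (0::real))" for l
    define yp where "yp l = y l + ep * d l" for l
    define ym where "ym l = y l - em * d l" for l
    have sd: "(\<Sum>l<m. d l) = 0"
    proof -
      have "(\<Sum>l<m. d l) = (\<Sum>l<m. (if l = i then 1 else 0) - (if l = j then 1 else 0))"
        unfolding d_def using j(2) by (intro sum.cong refl) auto
      also have "\<dots> = 0" using im jm by (simp add: sum_subtractf sum.delta')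
      finally show ?thesis .
    qed
    have ypH: "yp \<in> H" unfolding H_def
    proof (intro CollectI conjI allI impI)
      fix l assume "l < m"
      then show "0 \<le> yp l" "yp l \<le> 1" using yb[of l] j(2) yi yj unfolding yp_def d_def ep_def by auto
    next
      fix l assume "m \<le> l"
      then show "yp l = 0" using yz[of l] im jm unfolding yp_def d_def by auto
    next
      show "(\<Sum>l<m. yp l) = real r" unfolding yp_def using ys sd by (simp add: sum.distrib sum_distrib_left[symmetric])
    qed
    have ymH: "ym \<in> H" unfolding H_def
    proof (intro CollectI conjI allI impI)
      fix l assume "l < m"
      then show "0 \<le> ym l" "ym l \<le> 1" using yb[of l] j(2) yi yj unfolding ym_def d_def em_def by auto
    next
      fix l assume "m \<le> l"
      then show "ym l = 0" using yz[of l] im jm unfolding ym_def d_def by auto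
    next
      show "(\<Sum>l<m. ym l) = real r" unfolding ym_def using ys sd by (simp add: sum_subtractf sum_distrib_left[symmetric])
    qed
    have sub_p: "fr yp \<subset> fr y"
    proof
      show "fr yp \<subseteq> fr y"
      proof
        fix l assume l: "l \<in> fr yp"
        show "l \<in> fr y"
        proof (cases "l = i \<or> l = j")
          case True then show ?thesis using i j by auto
        next
          case False then show ?thesis using l unfolding fr_def yp_def d_def by auto
        qed
      qed
      show "fr yp \<noteq> fr y"
      proof (cases "ep = 1 - y i")
        case True
        then have "i \<notin> fr yp" unfolding fr_def yp_def d_def by auto
        then show ?thesis using i by auto
      next
        case False
        then have "ep = y j" unfolding ep_def by auto
        then have "j \<notin> fr yp" using j(2) unfolding fr_def yp_def d_def by auto
        then show ?thesis using j by auto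
      qed
    qed
    have sub_m: "fr ym \<subset> fr y"
    proof
      show "fr ym \<subseteq> fr y"
      proof
        fix l assume l: "l \<in> fr ym"
        show "l \<in> fr y"
        proof (cases "l = i \<or> l = j")
          case True then show ?thesis using i j by auto
        next
          case False then show ?thesis using l unfolding fr_def ym_def d_def by auto
        qed
      qed
      show "fr ym \<noteq> fr y"
      proof (cases "em = y i")
        case True
        then have "i \<notin> fr ym" unfolding fr_def ym_def d_def by auto
        then show ?thesis using i by auto
      next
        case False
        then have "em = 1 - y j" unfolding em_def by auto
        then have "j \<notin> fr ym" using j(2) unfolding fr_def ym_def d_def by auto
        then show ?thesis using j by auto
      qed
    qed
    have fin: "finite (fr y)" unfolding fr_def by simp
    have Fp: "F yp \<ge> L"
      using less.hyps[of yp] psubset_card_mono[OF fin sub_p] ypH unfolding fr_def by blast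
    have Fm: "F ym \<ge> L"
      using less.hyps[of ym] psubset_card_mono[OF fin sub_m] ymH unfolding fr_def by blast
    define \<theta> where "\<theta> = em / (ep + em)"
    have th: "0 \<le> \<theta>" "\<theta> \<le> 1" unfolding \<theta>_def using ep em by auto
    have comb: "(\<lambda>l. \<theta> * yp l + (1 - \<theta>) * ym l) = y"
    proof
      fix l
      have z: "\<theta> * ep - (1 - \<theta>) * em = 0" unfolding \<theta>_def using ep em by (simp add: field_simps)
      have "\<theta> * (y l + ep * d l) + (1 - \<theta>) * (y l - em * d l) = y l + (\<theta> * ep - (1 - \<theta>) * em) * d l"
        by (simp add: algebra_simps) 
      then show "\<theta> * yp l + (1 - \<theta>) * ym l = y l"
        unfolding yp_def ym_def using z by simp
    qed
    have "F y \<ge> \<theta> * F yp + (1 - \<theta>) * F ym" using conc[OF ypH ymH th] comb by simp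
    moreover have "\<theta> * F yp + (1 - \<theta>) * F ym \<ge> \<theta> * L + (1 - \<theta>) * L"
      using Fp Fm th by (intro add_mono mult_left_mono) auto
    ultimately show ?thesis by (simp add: algebra_simps)
  qed
qed

definition tr :: "nat \<Rightarrow> real mat \<Rightarrow> real" where "tr n Y = (\<Sum>j<n. Y $$ (j,j))"

lemma gram_qf:
  assumes B: "B \<in> carrier_mat n n"
  shows "qf n (transpose_mat B * B) z = (\<Sum>a<n. (\<Sum>b<n. B $$ (a,b) * z b)^2)"
proof -
  have Bt: "transpose_mat B \<in> carrier_mat n n" using B by simp
  have e: "(transpose_mat B * B) $$ (b,c) = (\<Sum>a<n. B $$ (a,b) * B $$ (a,c))" if "b < n" "c < n" for b c
    using that by (subst mult_entry[OF Bt B]) (auto simp: carrier_matD[OF B] intro!: sum.cong)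
  have "qf n (transpose_mat B * B) z = (\<Sum>b<n. \<Sum>c<n. \<Sum>a<n. (B $$ (a,b) * z b) * (B $$ (a,c) * z c))"
    unfolding qf_def
    by (intro sum.cong refl) (simp add: e sum_distrib_left sum_distrib_right algebra_simps del: index_mult_mat)
  also have "\<dots> = (\<Sum>a<n. \<Sum>b<n. \<Sum>c<n. (B $$ (a,b) * z b) * (B $$ (a,c) * z c))"
    by (rule sum_swap3[symmetric])
  also have "\<dots> = (\<Sum>a<n. (\<Sum>b<n. B $$ (a,b) * z b)^2)" unfolding sq_sum_expand by simp
  finally show ?thesis .
qed

lemma gram_qf_nonneg: "B \<in> carrier_mat n n \<Longrightarrow> qf n (transpose_mat B * B) z \<ge> 0"
  by (simp add: gram_qf sum_nonneg)

lemma psd_of_qf: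
  assumes Y: "Y \<in> carrier_mat n n" and sym: "transpose_mat Y = Y" and q: "\<And>z. qf n Y z \<ge> 0"
  shows "Y \<in> psd_cone n"
  unfolding psd_cone_def
proof (intro CollectI conjI ballI Y sym)
  fix v :: "real vec" assume v: "v \<in> carrier_vec n"
  have "v \<bullet> (Y *\<^sub>v v) = qf n Y (\<lambda>i. v $ i)"
    unfolding qf_def sprod_sum[OF mult_mat_vec_carrier[OF Y v]]
    by (intro sum.cong refl) (simp add: mult_vec_entry[OF Y v] sum_distrib_left mult.assoc)
  then show "0 \<le> v \<bullet> (Y *\<^sub>v v)" using q by simp
qed

lemma qf_col:
  assumes U: "orth n U" and i: "i < n"
  shows "qf n (U * dg n \<mu> * transpose_mat U) (\<lambda>a. U $$ (a,i)) = \<mu> i"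
proof -
  have Uc: "U \<in> carrier_mat n n" using U orth_def by auto
  have "qf n (U * dg n \<mu> * transpose_mat U) (\<lambda>a. U $$ (a,i)) = (\<Sum>l<n. \<mu> l * (if l = i then 1 else 0))"
    unfolding qf_dec[OF Uc] by (intro sum.cong refl) (simp add: orth_cols[OF U] i)
  also have "\<dots> = \<mu> i" using i by (simp add: times_if0 sum.delta' cong: if_cong)
  finally show ?thesis .
qed

lemma tr_dec:
  assumes U: "orth n U"
  shows "tr n (U * dg n \<mu> * transpose_mat U) = (\<Sum>l<n. \<mu> l)"
proof -
  have Uc: "U \<in> carrier_mat n n" using U orth_def by auto
  have "tr n (U * dg n \<mu> * transpose_mat U) = (\<Sum>j<n. \<Sum>l<n. \<mu> l * (U $$ (j,l) * U $$ (j,l)))"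
    unfolding tr_def by (intro sum.cong refl) (simp add: triple_entry[OF Uc] algebra_simps)
  also have "\<dots> = (\<Sum>l<n. \<mu> l * (\<Sum>j<n. U $$ (j,l) * U $$ (j,l)))"
    by (simp add: sum_distrib_left) (rule sum.swap)
  also have "\<dots> = (\<Sum>l<n. \<mu> l)" by (intro sum.cong refl) (simp add: orth_cols[OF U])
  finally show ?thesis .
qed

lemma spectral_psd:
  assumes Y: "Y \<in> psd_cone n"
  shows "\<exists>U. orth n U \<and> Y = U * dg n (\<lambda>i. eigs Y ! i) * transpose_mat U \<and> (\<forall>i<n. eigs Y ! i \<ge> 0)"
proof -
  have Yc: "Y \<in> carrier_mat n n" and sym: "transpose_mat Y = Y" using Y unfolding psd_cone_def by auto
  obtain U where U: "orth n U" and dec: "Y = U * dg n (\<lambda>i. eigs Y ! i) * transpose_mat U"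
    using spectral[OF Yc sym] by blast
  have "eigs Y ! i \<ge> 0" if "i < n" for i
    using psd_qf[OF Y, of "\<lambda>a. U $$ (a,i)"] qf_col[OF U that, of "\<lambda>i. eigs Y ! i"] dec by simp
  then show ?thesis using U dec by blast
qed

lemma sorted_rev_nth:
  assumes "sorted (rev L)" "i \<le> j" "j < length L"
  shows "L ! j \<le> L ! i"
proof -
  have "rev L ! (length L - 1 - j) \<le> rev L ! (length L - 1 - i)"
    by (rule sorted_nth_mono[OF assms(1)]) (use assms in auto)
  then show ?thesis using assms by (simp add: rev_nth)
qed

lemma eigs_sorted:
  assumes Y: "Y \<in> carrier_mat n n" "transpose_mat Y = Y" and ij: "i \<le> j" "j < n"
  shows "eigs Y ! j \<le> eigs Y ! i"
  using spectral[OF Y] sorted_rev_nth ij by metis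

lemma ln_tangent: "(b::real) > 0 \<Longrightarrow> y > 0 \<Longrightarrow> ln y \<le> ln b + y / b - 1"
  using ln_le_minus_one[of "y / b"] by (simp add: ln_div)

lemma split_sum: "(k::nat) \<le> m \<Longrightarrow> (\<Sum>i<m. g i) = (\<Sum>i<k. g i) + (\<Sum>i\<in>{k..<m}. (g i :: real))"
  using sum.atLeastLessThan_concat[of 0 k m g] by (simp add: lessThan_atLeast0)

lemma phi_as_sum:
  assumes "\<And>i. i < s \<Longrightarrow> eigs Y ! i + t > 0"
  shows "Phi s Y t = ereal (\<Sum>i<s. ln (eigs Y ! i + t))"
proof -
  have "Phi s Y t = (\<Sum>i<s. eln (eig Y (Suc i) + t))"
    unfolding Phi_def by (simp add: sum.atLeast1_atMost_eq)
  also have "\<dots> = (\<Sum>i<s. ereal (ln (eigs Y ! i + t)))"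
    by (intro sum.cong refl) (use assms in \<open>simp add: eig_def eln_def\<close>)
  finally show ?thesis by simp
qed

lemma majorant:
  fixes Z Y :: "real mat" and \<beta> :: "nat \<Rightarrow> real" and a t :: real and k s n :: nat
  assumes Z: "orth n Z" and ks: "k \<le> s" and sn: "s \<le> n" and t: "t > 0" and a: "a > 0"
    and \<beta>a: "\<And>i. i < k \<Longrightarrow> \<beta> i \<ge> a"
    and \<beta>dec: "\<And>i j. i \<le> j \<Longrightarrow> j < k \<Longrightarrow> \<beta> j \<le> \<beta> i"
    and Y: "Y \<in> psd_cone n"
  shows "Phi s Y t \<le> ereal ((\<Sum>i<k. ln (\<beta> i)) + real (s - k) * ln a - real s
      + t * ((\<Sum>i<k. 1 / \<beta> i) + real (s - k) / a)
      + tr n Y / a - (\<Sum>i<k. (1 / a - 1 / \<beta> i) * qf n Y (\<lambda>j. Z $$ (j,i))))"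
proof -
  have Yc: "Y \<in> carrier_mat n n" and sym: "transpose_mat Y = Y" using Y unfolding psd_cone_def by auto
  define \<mu> where "\<mu> i = eigs Y ! i" for i
  obtain U where U: "orth n U" and dec: "Y = U * dg n \<mu> * transpose_mat U"
    and srt: "sorted (rev (eigs Y))" and len: "length (eigs Y) = n"
    using spectral[OF Yc sym] unfolding \<mu>_def by blast
  have \<mu>0: "\<mu> i \<ge> 0" if "i < n" for i
    using spectral_psd[OF Y] that unfolding \<mu>_def by blast
  have \<mu>dec: "\<mu> j \<le> \<mu> i" if "i \<le> j" "j < n" for i j
    unfolding \<mu>_def by (rule sorted_rev_nth[OF srt that(1)]) (use that len in simp)
  have \<beta>pos: "\<beta> i > 0" if "i < k" for i using \<beta>a[OF that] a by simp
  define c where "c i = 1 / a - 1 / \<beta> i" for i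
  have c0: "c i \<ge> 0" if "i < k" for i
    unfolding c_def using \<beta>a[OF that] a by (simp add: frac_le)
  have cdec: "c j \<le> c i" if "i \<le> j" "j < k" for i j
    unfolding c_def using \<beta>dec[OF that] \<beta>pos that by (simp add: frac_le)
  have KF: "(\<Sum>i<k. c i * qf n Y (\<lambda>j. Z $$ (j,i))) \<le> (\<Sum>i<k. c i * \<mu> i)"
  proof (rule abel_lemma[OF cdec c0])
    fix j assume "j \<le> k"
    then show "(\<Sum>i<j. qf n Y (\<lambda>a. Z $$ (a, i))) \<le> (\<Sum>i<j. \<mu> i)"
      unfolding dec using kyfan[OF U \<mu>dec Z, where m=j] ks sn by simp
  qed auto
  have trY: "tr n Y = (\<Sum>l<n. \<mu> l)" unfolding dec by (rule tr_dec[OF U])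
  have Phi: "Phi s Y t = ereal (\<Sum>i<s. ln (\<mu> i + t))"
  proof -
    have "eigs Y ! i + t > 0" if "i < s" for i
      using \<mu>0[of i] t sn that unfolding \<mu>_def by simp
    then show ?thesis unfolding \<mu>_def by (rule phi_as_sum)
  qed
  have "(\<Sum>i<s. ln (\<mu> i + t)) = (\<Sum>i<k. ln (\<mu> i + t)) + (\<Sum>i\<in>{k..<s}. ln (\<mu> i + t))"
    by (rule split_sum[OF ks])
  also have "\<dots> \<le> (\<Sum>i<k. ln (\<beta> i) + (\<mu> i + t) / \<beta> i - 1) + (\<Sum>i\<in>{k..<s}. ln a + (\<mu> i + t) / a - 1)"
  proof (rule add_mono; rule sum_mono)
    fix i assume "i \<in> {..<k}"
    then show "ln (\<mu> i + t) \<le> ln (\<beta> i) + (\<mu> i + t) / \<beta> i - 1"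
      using ln_tangent[OF \<beta>pos, of i "\<mu> i + t"] \<mu>0[of i] t ks sn by auto
  next
    fix i assume "i \<in> {k..<s}"
    then show "ln (\<mu> i + t) \<le> ln a + (\<mu> i + t) / a - 1"
      using ln_tangent[OF a, of "\<mu> i + t"] \<mu>0[of i] t sn by auto
  qed
  also have "\<dots> = (\<Sum>i<k. ln (\<beta> i)) + real (s - k) * ln a - real s + t * ((\<Sum>i<k. 1 / \<beta> i) + real (s - k) / a)
      + ((\<Sum>i<k. \<mu> i / \<beta> i) + (\<Sum>i\<in>{k..<s}. \<mu> i / a))"
    using ks by (simp add: sum.distrib sum_subtractf add_divide_distrib sum_distrib_left algebra_simps
        sum_divide_distrib[symmetric] of_nat_diff diff_divide_distrib)
  also have "(\<Sum>i\<in>{k..<s}. \<mu> i / a) \<le> (\<Sum>i\<in>{k..<n}. \<mu> i / a)"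
    by (rule sum_mono2) (use sn \<mu>0 a in auto)
  also have "(\<Sum>i<k. \<mu> i / \<beta> i) + (\<Sum>i\<in>{k..<n}. \<mu> i / a) = tr n Y / a - (\<Sum>i<k. c i * \<mu> i)"
  proof -
    have "tr n Y / a = (\<Sum>i<k. \<mu> i / a) + (\<Sum>i\<in>{k..<n}. \<mu> i / a)"
      unfolding trY sum_divide_distrib by (rule split_sum) (use ks sn in simp)
    moreover have "(\<Sum>i<k. c i * \<mu> i) = (\<Sum>i<k. \<mu> i / a) - (\<Sum>i<k. \<mu> i / \<beta> i)"
      unfolding c_def by (simp add: sum_subtractf algebra_simps)
    ultimately show ?thesis by simp
  qed
  finally have "(\<Sum>i<s. ln (\<mu> i + t)) \<le> (\<Sum>i<k. ln (\<beta> i)) + real (s - k) * ln a - real s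
      + t * ((\<Sum>i<k. 1 / \<beta> i) + real (s - k) / a) + (tr n Y / a - (\<Sum>i<k. c i * \<mu> i))"
    by simp
  then have "(\<Sum>i<s. ln (\<mu> i + t)) \<le> (\<Sum>i<k. ln (\<beta> i)) + real (s - k) * ln a - real s
      + t * ((\<Sum>i<k. 1 / \<beta> i) + real (s - k) / a) + tr n Y / a - (\<Sum>i<k. c i * qf n Y (\<lambda>j. Z $$ (j,i)))"
    using KF by linarith
  then show ?thesis unfolding Phi c_def by simp
qed

lemma mset01:
  fixes y :: "nat \<Rightarrow> real"
  assumes "\<forall>l<m. y l = 0 \<or> y l = 1"
  shows "\<exists>p q. mset (map (\<lambda>l. a * y l) [0..<m]) = replicate_mset p a + replicate_mset q 0
     \<and> (\<Sum>l<m. y l) = real p \<and> m = p + q"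
  using assms
proof (induction m)
  case 0 then show ?case by simp
next
  case (Suc m)
  then obtain p q where pq: "mset (map (\<lambda>l. a * y l) [0..<m]) = replicate_mset p a + replicate_mset q 0"
    "(\<Sum>l<m. y l) = real p" "m = p + q" by auto
  have "y m = 0 \<or> y m = 1" using Suc.prems by simp
  then show ?case
  proof
    assume "y m = 0"
    then show ?thesis using pq by (intro exI[of _ p] exI[of _ "Suc q"]) simp
  next
    assume "y m = 1"
    then show ?thesis using pq by (intro exI[of _ "Suc p"] exI[of _ q]) (simp add: add.commute)
  qed
qed

lemma lin_entry:
  assumes "A \<in> carrier_mat n n" "B \<in> carrier_mat n n" "i < n" "j < n"
  shows "(x \<cdot>\<^sub>m A + y \<cdot>\<^sub>m B) $$ (i,j) = x * A $$ (i,j) + y * B $$ (i,j)"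
  using assms by simp

lemma triple_sym:
  assumes V: "V \<in> carrier_mat n n"
  shows "transpose_mat (V * dg n f * transpose_mat V) = V * dg n f * transpose_mat V"
proof (rule eq_matI)
  fix i j assume "i < dim_row (V * dg n f * transpose_mat V)" "j < dim_col (V * dg n f * transpose_mat V)"
  then have i: "i < n" and j: "j < n" using V by auto
  have "transpose_mat (V * dg n f * transpose_mat V) $$ (i,j) = (V * dg n f * transpose_mat V) $$ (j,i)"
    using i j V by simp
  also have "\<dots> = (\<Sum>l<n. V $$ (j,l) * f l * V $$ (i,l))" by (rule triple_entry[OF V j i])
  also have "\<dots> = (\<Sum>l<n. V $$ (i,l) * f l * V $$ (j,l))" by (simp add: algebra_simps)
  also have "\<dots> = (V * dg n f * transpose_mat V) $$ (i,j)" by (rule triple_entry[OF V i j, symmetric])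
  finally show "transpose_mat (V * dg n f * transpose_mat V) $$ (i,j) = (V * dg n f * transpose_mat V) $$ (i,j)" .
qed (use V in auto)

lemma mat_lin:
  assumes V: "V \<in> carrier_mat n n" and lin: "\<And>l. l < n \<Longrightarrow> h l = \<theta> * f l + (1 - \<theta>) * g l"
  shows "V * dg n h * transpose_mat V = \<theta> \<cdot>\<^sub>m (V * dg n f * transpose_mat V) + (1 - \<theta>) \<cdot>\<^sub>m (V * dg n g * transpose_mat V)"
proof (rule eq_matI)
  fix i j assume "i < dim_row (\<theta> \<cdot>\<^sub>m (V * dg n f * transpose_mat V) + (1 - \<theta>) \<cdot>\<^sub>m (V * dg n g * transpose_mat V))"
    "j < dim_col (\<theta> \<cdot>\<^sub>m (V * dg n f * transpose_mat V) + (1 - \<theta>) \<cdot>\<^sub>m (V * dg n g * transpose_mat V))"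
  then have i: "i < n" and j: "j < n" using V by auto
  have "(V * dg n h * transpose_mat V) $$ (i,j) = (\<Sum>l<n. V $$ (i,l) * h l * V $$ (j,l))"
    by (rule triple_entry[OF V i j])
  also have "\<dots> = \<theta> * (\<Sum>l<n. V $$ (i,l) * f l * V $$ (j,l)) + (1 - \<theta>) * (\<Sum>l<n. V $$ (i,l) * g l * V $$ (j,l))"
    by (simp add: lin sum_distrib_left sum.distrib[symmetric] algebra_simps)
  finally show "(V * dg n h * transpose_mat V) $$ (i,j) = (\<theta> \<cdot>\<^sub>m (V * dg n f * transpose_mat V) + (1 - \<theta>) \<cdot>\<^sub>m (V * dg n g * transpose_mat V)) $$ (i,j)"
    by (subst lin_entry[of _ n]) (use i j V in \<open>simp_all add: triple_entry[OF V i j] del: index_mult_mat\<close>)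
qed (use V in auto)

lemma mat_psd:
  assumes V: "V \<in> carrier_mat n n" and f: "\<And>l. l < n \<Longrightarrow> f l \<ge> 0"
  shows "V * dg n f * transpose_mat V \<in> psd_cone n"
proof (rule psd_of_qf)
  show "V * dg n f * transpose_mat V \<in> carrier_mat n n" using V by simp
  show "transpose_mat (V * dg n f * transpose_mat V) = V * dg n f * transpose_mat V"
    by (rule triple_sym[OF V])
  fix z show "qf n (V * dg n f * transpose_mat V) z \<ge> 0"
    unfolding qf_dec[OF V] by (rule sum_nonneg) (use f in simp)
qed


lemma lower_bound:
  fixes X0 :: "real mat" and n s k :: nat and a :: real
  assumes X0: "X0 \<in> psd_cone n" and ks: "k < s" and sn: "s \<le> n"
    and a: "a > 0" and asum: "(\<Sum>i\<in>{k..<n}. eigs X0 ! i) = real (s - k) * a"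
    and ka: "k = 0 \<or> eigs X0 ! (k - 1) > a" and ak: "eigs X0 ! k \<le> a"
  shows "Phi_hat n s X0 0 \<ge> ereal ((\<Sum>i<k. ln (eigs X0 ! i)) + real (s - k) * ln a)"
proof -
  define \<beta> where "\<beta> i = eigs X0 ! i" for i
  define \<Gamma> where "\<Gamma> = (\<Sum>i<k. ln (\<beta> i)) + real (s - k) * ln a"
  have X0c: "X0 \<in> carrier_mat n n" and sym: "transpose_mat X0 = X0" using X0 unfolding psd_cone_def by auto
  obtain V where V: "orth n V" and dec: "X0 = V * dg n \<beta> * transpose_mat V"
    and srt: "sorted (rev (eigs X0))" and len: "length (eigs X0) = n"
    using spectral[OF X0c sym] unfolding \<beta>_def by blast
  have Vc: "V \<in> carrier_mat n n" using V orth_def by auto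
  have \<beta>0: "\<beta> i \<ge> 0" if "i < n" for i using spectral_psd[OF X0] that unfolding \<beta>_def by blast
  have \<beta>dec: "\<beta> j \<le> \<beta> i" if "i \<le> j" "j < n" for i j
    unfolding \<beta>_def by (rule sorted_rev_nth[OF srt that(1)]) (use that len in simp)
  have \<beta>big: "\<beta> i > a" if "i < k" for i
  proof -
    have "k \<noteq> 0" using that by simp
    then have "\<beta> (k - 1) > a" using ka unfolding \<beta>_def by simp
    moreover have "\<beta> (k - 1) \<le> \<beta> i" using \<beta>dec[of i "k - 1"] that ks sn by simp
    ultimately show ?thesis by simp
  qed
  have \<beta>small: "\<beta> i \<le> a" if "k \<le> i" "i < n" for i using \<beta>dec[of k i] that ak unfolding \<beta>_def by simp
  define m where "m = n - k"
  define r where "r = s - k"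
  define H where "H = {y. (\<forall>i<m. 0 \<le> y i \<and> y i \<le> 1) \<and> (\<forall>i\<ge>m. y i = 0) \<and> (\<Sum>i<m. y i) = real r}"
  define mb where "mb y l = (if l < k then \<beta> l else a * y (l - k))" for y :: "nat \<Rightarrow> real" and l
  define Mat where "Mat y = V * dg n (mb y) * transpose_mat V" for y
  have Mat_psd: "Mat y \<in> psd_cone n" if "y \<in> H" for y
    unfolding Mat_def
  proof (rule mat_psd[OF Vc])
    fix l assume l: "l < n"
    show "mb y l \<ge> 0"
    proof (cases "l < k")
      case True then show ?thesis using \<beta>0 l unfolding mb_def by simp
    next
      case False
      then have "l - k < m" using l unfolding m_def by simp
      then have "y (l - k) \<ge> 0" using that unfolding H_def by simp
      then show ?thesis using False a unfolding mb_def by simp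
    qed
  qed
  show ?thesis
    unfolding Phi_hat_def \<Gamma>_def[symmetric] \<beta>_def[symmetric]
  proof (rule INF_greatest)
    fix g assume "g \<in> {g. concave_on_psd n g \<and> (\<forall>Y\<in>psd_cone n. Phi s Y 0 \<le> ereal (g Y))}"
    then have conc: "concave_on_psd n g" and maj: "\<And>Y. Y \<in> psd_cone n \<Longrightarrow> Phi s Y 0 \<le> ereal (g Y)" by auto
    define F where "F y = g (Mat y)" for y
    have concF: "F (\<lambda>i. \<theta> * y i + (1 - \<theta>) * z i) \<ge> \<theta> * F y + (1 - \<theta>) * F z"
      if "y \<in> H" "z \<in> H" "0 \<le> \<theta>" "\<theta> \<le> 1" for y z \<theta>
    proof -
      have "Mat (\<lambda>i. \<theta> * y i + (1 - \<theta>) * z i) = \<theta> \<cdot>\<^sub>m Mat y + (1 - \<theta>) \<cdot>\<^sub>m Mat z"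
        unfolding Mat_def by (rule mat_lin[OF Vc]) (simp add: mb_def algebra_simps)
      then show ?thesis unfolding F_def using conc Mat_psd[OF that(1)] Mat_psd[OF that(2)] that(3,4)
        unfolding concave_on_psd_def by simp
    qed
    have vertF: "F y \<ge> \<Gamma>" if yH: "y \<in> H" and y01: "\<forall>i<m. y i = 0 \<or> y i = 1" for y
    proof -
      define Lv where "Lv = map \<beta> [0..<k] @ replicate r a @ replicate (n - s) 0"
      obtain p q where pq: "mset (map (\<lambda>l. a * y l) [0..<m]) = replicate_mset p a + replicate_mset q 0"
        "(\<Sum>l<m. y l) = real p" "m = p + q"
        using mset01[OF y01, of a] by blast
      have pr: "p = r" using pq(2) yH unfolding H_def by simp
      have qr: "q = n - s" using pq(3) pr ks sn unfolding m_def r_def by simp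
      have mapmb: "map (mb y) [0..<n] = map \<beta> [0..<k] @ map (\<lambda>l. a * y l) [0..<m]"
        by (rule nth_equalityI) (use ks sn in \<open>auto simp: nth_append mb_def m_def\<close>)
      have msetL: "mset Lv = mset (map (mb y) [0..<n])"
        unfolding mapmb Lv_def using pq(1) pr qr by simp
      have srtL: "sorted (rev Lv)"
      proof -
        have "rev Lv = replicate (n - s) 0 @ replicate r a @ rev (map \<beta> [0..<k])"
          unfolding Lv_def by simp
        moreover have "sorted (rev (map \<beta> [0..<k]))"
          unfolding sorted_iff_nth_mono using \<beta>dec ks sn by (auto simp: rev_nth)
        moreover have "\<forall>x\<in>set (map \<beta> [0..<k]). a \<le> x" using \<beta>big by (auto simp: less_imp_le)
        ultimately show ?thesis using a by (auto simp: sorted_append)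
      qed
      have eigsM: "eigs (Mat y) = Lv" unfolding Mat_def by (rule eigs_orth_dg[OF V srtL msetL])
      have Lvk: "Lv ! i = \<beta> i" if "i < k" for i using that unfolding Lv_def by (simp add: nth_append)
      have Lvs: "Lv ! i = a" if "k \<le> i" "i < s" for i
      proof -
        have "i - k < s - k" using that by simp
        then show ?thesis using that ks unfolding Lv_def r_def by (simp add: nth_append)
      qed
      have pos: "eigs (Mat y) ! i + 0 > 0" if "i < s" for i
        unfolding eigsM using Lvk Lvs \<beta>big a that by (cases "i < k") fastforce+
      have "Phi s (Mat y) 0 = ereal (\<Sum>i<s. ln (Lv ! i + 0))" using phi_as_sum[OF pos] eigsM by simp
      also have "(\<Sum>i<s. ln (Lv ! i + 0)) = (\<Sum>i<k. ln (Lv ! i)) + (\<Sum>i\<in>{k..<s}. ln (Lv ! i))"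
        using split_sum[of k s "\<lambda>i. ln (Lv ! i)"] ks by simp
      also have "\<dots> = \<Gamma>" unfolding \<Gamma>_def using Lvk Lvs by simp
      finally have "Phi s (Mat y) 0 = ereal \<Gamma>" .
      then show ?thesis using maj[OF Mat_psd[OF yH]] unfolding F_def by simp
    qed
    define ys where "ys l = (if l < m then \<beta> (l + k) / a else 0)" for l
    have ysH: "ys \<in> H" unfolding H_def
    proof (intro CollectI conjI allI impI)
      fix i assume "i < m"
      then show "0 \<le> ys i" "ys i \<le> 1" using \<beta>0[of "i + k"] \<beta>small[of "i + k"] a unfolding ys_def m_def by auto
    next
      fix i assume "m \<le> i" then show "ys i = 0" unfolding ys_def by simp
    next
      have "(\<Sum>i<m. ys i) = (\<Sum>i<m. \<beta> (i + k)) / a" unfolding ys_def by (simp add: sum_divide_distrib)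
      also have "(\<Sum>i<m. \<beta> (i + k)) = (\<Sum>i\<in>{k..<n}. \<beta> i)"
        using sum.shift_bounds_nat_ivl[of \<beta> 0 k m] ks sn unfolding m_def by (simp add: lessThan_atLeast0)
      finally show "(\<Sum>i<m. ys i) = real r" using asum a unfolding r_def \<beta>_def by simp
    qed
    have "Mat ys = X0" unfolding Mat_def dec
      by (rule arg_cong[where f = "\<lambda>d. V * d * transpose_mat V"], unfold dg_def, rule eq_matI)
         (use a in \<open>auto simp: mb_def ys_def m_def\<close>)
    moreover have "F ys \<ge> \<Gamma>"
      by (rule hypersimplex[of m r F \<Gamma>, folded H_def, OF concF vertF ysH])
    ultimately show "ereal \<Gamma> \<le> ereal (g X0)" unfolding F_def by simp
  qed
qed

lemma vec_qf:
  assumes Y: "Y \<in> carrier_mat n n"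
  shows "vec n z \<bullet> (Y *\<^sub>v vec n z) = qf n Y z"
proof -
  have v: "vec n z \<in> carrier_vec n" by simp
  show ?thesis
    unfolding qf_def sprod_sum[OF mult_mat_vec_carrier[OF Y v]]
    by (intro sum.cong refl) (simp add: mult_vec_entry[OF Y v] sum_distrib_left mult.assoc)
qed

lemma lambda_min_pos:
  assumes C: "sym_pd n C" and n: "n \<ge> 1"
  shows "lambda_min C > 0"
proof -
  have Cc: "C \<in> carrier_mat n n" and sym: "transpose_mat C = C" using C unfolding sym_pd_def by auto
  define \<mu> where "\<mu> i = eigs C ! i" for i
  obtain U where U: "orth n U" and dec: "C = U * dg n \<mu> * transpose_mat U"
    using spectral[OF Cc sym] unfolding \<mu>_def by blast
  define i where "i = n - 1"
  have i: "i < n" using n unfolding i_def by simp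
  define z where "z a = U $$ (a, i)" for a
  have "(\<Sum>a<n. (z a)^2) = 1" using orth_cols[OF U i i] unfolding z_def by (simp add: power2_eq_square)
  then obtain a0 where a0: "a0 < n" "z a0 \<noteq> 0"
    by (metis (mono_tags, lifting) lessThan_iff power_zero_numeral sum.neutral zero_neq_one)
  have "vec n z \<noteq> 0\<^sub>v n"
  proof
    assume "vec n z = 0\<^sub>v n"
    then have "vec n z $ a0 = 0\<^sub>v n $ a0" by simp
    then show False using a0 by simp
  qed
  then have "vec n z \<bullet> (C *\<^sub>v vec n z) > 0" using C unfolding sym_pd_def by auto
  then have "qf n C z > 0" using vec_qf[OF Cc] by simp
  moreover have "qf n C z = \<mu> i" unfolding z_def dec by (rule qf_col[OF U i])
  moreover have "lambda_min C = \<mu> i" unfolding \<mu>_def lambda_min_def eig_def i_def using Cc by simp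
  ultimately show ?thesis by simp
qed

lemma qf_transfer:
  assumes U1: "orth n U1" and V1: "orth n V1" and V: "V \<in> carrier_mat n n" and i: "i < n"
  shows "qf n (U1 * dg n \<mu> * transpose_mat U1) (\<lambda>a. (U1 * transpose_mat V1 * V) $$ (a,i))
       = qf n (V1 * dg n \<mu> * transpose_mat V1) (\<lambda>a. V $$ (a,i))"
proof -
  have U1c: "U1 \<in> carrier_mat n n" using U1 orth_def by auto
  have V1c: "V1 \<in> carrier_mat n n" using V1 orth_def by auto
  have P: "transpose_mat U1 * (U1 * transpose_mat V1 * V) = transpose_mat V1 * V"
  proof -
    have "transpose_mat U1 * (U1 * transpose_mat V1 * V) = (transpose_mat U1 * U1) * (transpose_mat V1 * V)"
      using U1c V1c V by (simp add: sq_assoc[of _ n])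
    also have "\<dots> = transpose_mat V1 * V" using U1 V1c V unfolding orth_def by simp
    finally show ?thesis .
  qed
  have e: "(\<Sum>a<n. U1 $$ (a,l) * (U1 * transpose_mat V1 * V) $$ (a,i)) = (\<Sum>a<n. V1 $$ (a,l) * V $$ (a,i))"
    if l: "l < n" for l
  proof -
    have M: "U1 * transpose_mat V1 * V \<in> carrier_mat n n" using U1c V1c V by simp
    have "(\<Sum>a<n. U1 $$ (a,l) * (U1 * transpose_mat V1 * V) $$ (a,i)) = (transpose_mat U1 * (U1 * transpose_mat V1 * V)) $$ (l,i)"
      using l i U1c M by (subst mult_entry[OF sq_tr_carrier[OF U1c] M l i]) simp
    also have "\<dots> = (transpose_mat V1 * V) $$ (l,i)" unfolding P ..
    also have "\<dots> = (\<Sum>a<n. V1 $$ (a,l) * V $$ (a,i))"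
      using l i V1c V by (subst mult_entry[OF sq_tr_carrier[OF V1c] V l i]) simp
    finally show ?thesis .
  qed
  show ?thesis unfolding qf_dec[OF U1c] qf_dec[OF V1c] by (intro sum.cong refl) (simp add: e)
qed

lemma orth_mult: assumes "orth n A" "orth n B" shows "orth n (A * B)"
proof -
  have Ac: "A \<in> carrier_mat n n" and Bc: "B \<in> carrier_mat n n" using assms orth_def by auto
  have "transpose_mat (A * B) * (A * B) = transpose_mat B * (transpose_mat A * A) * B"
    using Ac Bc by (simp add: transpose_mult[OF Ac Bc] sq_assoc[of _ n])
  also have "\<dots> = 1\<^sub>m n" using assms Bc unfolding orth_def by simp
  finally show ?thesis unfolding orth_def using Ac Bc by simp
qed

lemma orth_tr: assumes "orth n A" shows "orth n (transpose_mat A)"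
  using orth_right[OF assms] assms unfolding orth_def by simp

lemma ereal_diff_bound:
  fixes u v :: ereal and p d :: real
  assumes "u \<ge> ereal p" "v \<le> ereal (p - d)"
  shows "u - v \<ge> ereal d"
  using assms by (cases u; cases v) auto

lemma tr_lin: "A \<in> carrier_mat n n \<Longrightarrow> B \<in> carrier_mat n n \<Longrightarrow>
   tr n (x \<cdot>\<^sub>m A + y \<cdot>\<^sub>m B) = x * tr n A + y * tr n B"
  unfolding tr_def by (simp add: sum.distrib sum_distrib_left)

lemma qf_lin: "A \<in> carrier_mat n n \<Longrightarrow> B \<in> carrier_mat n n \<Longrightarrow>
   qf n (x \<cdot>\<^sub>m A + y \<cdot>\<^sub>m B) z = x * qf n A z + y * qf n B z"
  unfolding qf_def by (simp add: sum.distrib sum_distrib_left algebra_simps)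

lemma linear_concave:
  fixes c0 e :: real and c :: "nat \<Rightarrow> real" and Z :: "real mat"
  shows "concave_on_psd n (\<lambda>Y. c0 + tr n Y / e - (\<Sum>i<k. c i * qf n Y (\<lambda>j. Z $$ (j,i))))"
  unfolding concave_on_psd_def
proof (intro ballI allI impI)
  fix X Y :: "real mat" and \<theta> :: real
  assume X: "X \<in> psd_cone n" and Y: "Y \<in> psd_cone n"
  then have Xc: "X \<in> carrier_mat n n" and Yc: "Y \<in> carrier_mat n n" unfolding psd_cone_def by auto
  show "\<theta> * (c0 + tr n X / e - (\<Sum>i<k. c i * qf n X (\<lambda>j. Z $$ (j, i)))) +
         (1 - \<theta>) * (c0 + tr n Y / e - (\<Sum>i<k. c i * qf n Y (\<lambda>j. Z $$ (j, i))))
         \<le> c0 + tr n (\<theta> \<cdot>\<^sub>m X + (1 - \<theta>) \<cdot>\<^sub>m Y) / e -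
            (\<Sum>i<k. c i * qf n (\<theta> \<cdot>\<^sub>m X + (1 - \<theta>) \<cdot>\<^sub>m Y) (\<lambda>j. Z $$ (j, i)))"
    unfolding tr_lin[OF Xc Yc] qf_lin[OF Xc Yc] add_divide_distrib times_divide_eq_right[symmetric]
    by (simp add: algebra_simps sum.distrib sum_distrib_left add_divide_distrib sum_subtractf)
qed

lemma gram_Mx:
  assumes A: "A \<in> carrier_mat n n" and x: "\<And>i. i < n \<Longrightarrow> 0 \<le> x i"
  defines "B \<equiv> mat n n (\<lambda>(a,i). A $$ (a,i) * sqrt (x i))"
  shows "Mx n A x = B * transpose_mat B"
proof (rule eq_matI)
  fix j l assume "j < dim_row (B * transpose_mat B)" "l < dim_col (B * transpose_mat B)"
  then have j: "j < n" and l: "l < n" unfolding B_def by auto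
  have Bc: "B \<in> carrier_mat n n" unfolding B_def by simp
  have "(B * transpose_mat B) $$ (j,l) = (\<Sum>i<n. B $$ (j,i) * B $$ (l,i))"
    using j l Bc by (subst mult_entry[OF Bc sq_tr_carrier[OF Bc] j l]) simp
  also have "\<dots> = (\<Sum>i<n. x i * (A $$ (j,i) * A $$ (l,i)))"
    using j l x unfolding B_def
    by (intro sum.cong refl) (auto simp: algebra_simps real_sqrt_mult[symmetric] simp del: real_sqrt_mult)
  finally show "Mx n A x $$ (j,l) = (B * transpose_mat B) $$ (j,l)" unfolding Mx_def using j l by simp
qed (auto simp: Mx_def B_def)

lemma gram_W:
  fixes x :: "nat \<Rightarrow> real"
  assumes A: "A \<in> carrier_mat n n" and i: "i < n" and j: "j < n"
  defines "B \<equiv> mat n n (\<lambda>(a,i). A $$ (a,i) * sqrt (x i))"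
  shows "(transpose_mat B * B) $$ (i,j) = sqrt (x i) * sqrt (x j) * (transpose_mat A * A) $$ (i,j)"
proof -
  have Bc: "B \<in> carrier_mat n n" unfolding B_def by simp
  have "(transpose_mat B * B) $$ (i,j) = (\<Sum>a<n. B $$ (a,i) * B $$ (a,j))"
    using i j Bc by (subst mult_entry[OF sq_tr_carrier[OF Bc] Bc i j]) simp
  also have "\<dots> = sqrt (x i) * sqrt (x j) * (\<Sum>a<n. A $$ (a,i) * A $$ (a,j))"
    unfolding B_def using i j by (simp add: sum_distrib_left algebra_simps)
  also have "(\<Sum>a<n. A $$ (a,i) * A $$ (a,j)) = (transpose_mat A * A) $$ (i,j)"
    using i j A by (subst mult_entry[OF sq_tr_carrier[OF A] A i j]) simp
  finally show ?thesis .
qed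


lemma xdown_facts:
  fixes x :: "nat \<Rightarrow> real" and n :: nat
  defines "xd \<equiv> rev (sort (map x [0..<n]))"
  shows "\<exists>p. p permutes {..<n} \<and> (\<forall>i<n. xd ! i = x (p i)) \<and> sorted (rev xd) \<and> length xd = n
     \<and> (\<forall>i. 1 \<le> i \<longrightarrow> xdown n x i = xd ! (i - 1))"
proof -
  have m: "mset xd = mset (map x [0..<n])" unfolding xd_def by simp
  obtain p where p: "p permutes {..<length (map x [0..<n])}" and pl: "permute_list p (map x [0..<n]) = xd"
    using mset_eq_permutation[OF m] by blast
  have p': "p permutes {..<n}" using p by simp
  have "xd ! i = x (p i)" if "i < n" for i
    using permute_list_nth[OF p, of i] that pl permutes_in_image[OF p', of i] by simp
  moreover have "sorted (rev xd)" unfolding xd_def by simp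
  moreover have "length xd = n" unfolding xd_def by simp
  moreover have "xdown n x i = xd ! (i - 1)" if "1 \<le> i" for i using that unfolding xdown_def xd_def by simp
  ultimately show ?thesis using p' by blast
qed

lemma xdown_le1:
  assumes "\<And>i. i < n \<Longrightarrow> x i \<le> 1" and "1 \<le> i" "i \<le> n"
  shows "xdown n x i \<le> 1"
proof -
  obtain p where p: "p permutes {..<n}" and xd: "\<forall>i<n. rev (sort (map x [0..<n])) ! i = x (p i)"
    and xdn: "\<forall>i. 1 \<le> i \<longrightarrow> xdown n x i = rev (sort (map x [0..<n])) ! (i - 1)"
    using xdown_facts[of n x] by blast
  have "i - 1 < n" using assms by simp
  then have "xdown n x i = x (p (i - 1))" using xd xdn assms by simp
  moreover have "p (i - 1) < n" using permutes_in_image[OF p] \<open>i - 1 < n\<close> by simp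
  ultimately show ?thesis using assms(1) by simp
qed

lemma xdown_bound:
  fixes x :: "nat \<Rightarrow> real"
  assumes V: "orth n V" and kn: "k \<le> n" and x0: "\<And>j. j < n \<Longrightarrow> 0 \<le> x j"
  shows "(\<Sum>i<k. \<Sum>j<n. x j * (V $$ (j,i))^2) \<le> (\<Sum>i = 1..k. xdown n x i)"
proof -
  define xd where "xd = rev (sort (map x [0..<n]))"
  obtain p where p: "p permutes {..<n}" and xdp: "\<forall>i<n. xd ! i = x (p i)" and srt: "sorted (rev xd)"
    and len: "length xd = n" and xdn: "\<forall>i. 1 \<le> i \<longrightarrow> xdown n x i = xd ! (i - 1)"
    using xdown_facts[of n x] unfolding xd_def by blast
  define q where "q j = (\<Sum>i<k. (V $$ (j,i))^2)" for j
  have "(\<Sum>i<k. \<Sum>j<n. x j * (V $$ (j,i))^2) = (\<Sum>j<n. x j * q j)"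
    unfolding q_def sum_distrib_left by (rule sum.swap)
  also have "\<dots> = (\<Sum>j<n. x (p j) * q (p j))"
    using sum.permute[OF p, of "\<lambda>j. x j * q j"] by (simp add: comp_def)
  also have "\<dots> = (\<Sum>j<n. xd ! j * q (p j))" using xdp by simp
  also have "\<dots> \<le> (\<Sum>j<k. xd ! j)"
  proof (rule weight_lemma[OF _ _ _ kn])
    fix i j assume "i \<le> j" "j < n" then show "xd ! j \<le> xd ! i" using sorted_rev_nth[OF srt] len by simp
  next
    fix l assume l: "l < n"
    then have pl: "p l < n" using permutes_in_image[OF p] by simp
    have "q (p l) \<le> (\<Sum>i<n. (V $$ (p l,i))^2)" unfolding q_def by (rule sum_mono2) (use kn in auto)
    also have "\<dots> = 1" using orth_rows[OF V pl pl] by (simp add: power2_eq_square)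
    finally show "0 \<le> q (p l) \<and> q (p l) \<le> 1" unfolding q_def by (auto intro: sum_nonneg)
  next
    have "(\<Sum>l<n. q (p l)) = (\<Sum>l<n. q l)" using sum.permute[OF p, of q] by (simp add: comp_def)
    also have "\<dots> = (\<Sum>i<k. \<Sum>j<n. (V $$ (j,i))^2)" unfolding q_def by (rule sum.swap)
    also have "\<dots> = (\<Sum>i<k. 1)" using orth_cols[OF V] kn by (intro sum.cong refl) (simp add: power2_eq_square)
    finally show "(\<Sum>l<n. q (p l)) = real k" by simp
  qed
  also have "\<dots> = (\<Sum>i = 1..k. xdown n x i)"
    using xdn by (simp add: sum.atLeast1_atMost_eq)
  finally show ?thesis .
qed

theorem theorem3:
  fixes n s k :: nat and C A0 A1 :: "real mat" and xs :: "nat \<Rightarrow> real"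
  assumes "n \<ge> 1" and "1 \<le> s" and "s \<le> n"
    and "sym_pd n C"
    and "cholesky_factor n C A0"
    and "cholesky_factor n (C - lambda_min C \<cdot>\<^sub>m 1\<^sub>m n) A1"
    and "optimal n s A1 (lambda_min C) xs"
    and "k < s"
    and "k = 0 \<or> eig (Mx n A0 xs) k > (\<Sum>i=k+1..n. eig (Mx n A0 xs) i) / real (s - k)"
    and "(\<Sum>i=k+1..n. eig (Mx n A0 xs) i) / real (s - k) \<ge> eig (Mx n A0 xs) (k + 1)"
  shows "zhat n s A0 0 - zhat n s A1 (lambda_min C) \<ge>
           ereal (lambda_min C * (real k - (\<Sum>i=1..k. xdown n xs i)) *
              (real (s - k) / (\<Sum>i=k+1..n. eig (Mx n A0 xs) i)
               - (if k = 0 then 0 else 1 / eig (Mx n A0 xs) k)))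
       \<and> lambda_min C * (real k - (\<Sum>i=1..k. xdown n xs i)) *
              (real (s - k) / (\<Sum>i=k+1..n. eig (Mx n A0 xs) i)
               - (if k = 0 then 0 else 1 / eig (Mx n A0 xs) k)) \<ge> 0
       \<and> (k \<ge> 1 \<and> xdown n xs k < 1 \<longrightarrow> zhat n s A0 0 > zhat n s A1 (lambda_min C))"
proof -
  note n1 = assms(1) and s1 = assms(2) and sn = assms(3) and Cpd = assms(4) and ch0 = assms(5)
    and ch1 = assms(6) and opt = assms(7) and ks = assms(8) and hyp1 = assms(9) and hyp2 = assms(10)
  define lam where "lam = lambda_min C"
  have lam: "lam > 0" unfolding lam_def by (rule lambda_min_pos[OF Cpd n1])
  have feas: "feasible n s xs" using opt unfolding optimal_def by simp
  have x01: "0 \<le> xs i \<and> xs i \<le> 1" if "i < n" for i using feas that unfolding feasible_def by simp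
  have xsum: "(\<Sum>i<n. xs i) = real s" using feas unfolding feasible_def by simp
  have Cc: "C \<in> carrier_mat n n" using Cpd unfolding sym_pd_def by simp
  have A0c: "A0 \<in> carrier_mat n n" and A0C: "transpose_mat A0 * A0 = C"
    using ch0 unfolding cholesky_factor_def by auto
  have A1c: "A1 \<in> carrier_mat n n" and A1C: "transpose_mat A1 * A1 = C - lam \<cdot>\<^sub>m 1\<^sub>m n"
    using ch1 unfolding cholesky_factor_def lam_def by auto
  define B0 where "B0 = mat n n (\<lambda>(a,i). A0 $$ (a,i) * sqrt (xs i))"
  define B1 where "B1 = mat n n (\<lambda>(a,i). A1 $$ (a,i) * sqrt (xs i))"
  have B0c: "B0 \<in> carrier_mat n n" and B1c: "B1 \<in> carrier_mat n n" unfolding B0_def B1_def by auto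
  define X0 where "X0 = Mx n A0 xs"
  define X1 where "X1 = Mx n A1 xs"
  define W0 where "W0 = transpose_mat B0 * B0"
  define W1 where "W1 = transpose_mat B1 * B1"
  have X0B: "X0 = B0 * transpose_mat B0" unfolding X0_def B0_def by (rule gram_Mx[OF A0c]) (use x01 in simp)
  have X1B: "X1 = B1 * transpose_mat B1" unfolding X1_def B1_def by (rule gram_Mx[OF A1c]) (use x01 in simp)
  have psd_gram: "transpose_mat B * B \<in> psd_cone n" if B: "B \<in> carrier_mat n n" for B :: "real mat"
    by (rule psd_of_qf) (use B in \<open>simp_all add: gram_qf_nonneg transpose_mult[OF sq_tr_carrier[OF B] B]\<close>)
  have X0psd: "X0 \<in> psd_cone n" using psd_gram[OF sq_tr_carrier[OF B0c]] unfolding X0B by simp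
  have X1psd: "X1 \<in> psd_cone n" using psd_gram[OF sq_tr_carrier[OF B1c]] unfolding X1B by simp
  have W0psd: "W0 \<in> psd_cone n" unfolding W0_def by (rule psd_gram[OF B0c])
  have W1psd: "W1 \<in> psd_cone n" unfolding W1_def by (rule psd_gram[OF B1c])
  have W0c: "W0 \<in> carrier_mat n n" and W1c: "W1 \<in> carrier_mat n n" and X0c: "X0 \<in> carrier_mat n n"
    and X1c: "X1 \<in> carrier_mat n n" using W0psd W1psd X0psd X1psd unfolding psd_cone_def by auto
  have eigsX0: "eigs X0 = eigs W0"
  proof -
    have "char_poly X0 = char_poly W0" unfolding X0B W0_def by (rule char_poly_comm[OF B0c sq_tr_carrier[OF B0c]])
    then show ?thesis unfolding eigs_def using X0c W0c by simp
  qed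
  have eigsX1: "eigs X1 = eigs W1"
  proof -
    have "char_poly X1 = char_poly W1" unfolding X1B W1_def by (rule char_poly_comm[OF B1c sq_tr_carrier[OF B1c]])
    then show ?thesis unfolding eigs_def using X1c W1c by simp
  qed
  have Wrel: "W1 $$ (i,j) = W0 $$ (i,j) - lam * (if i = j then xs i else 0)" if "i < n" "j < n" for i j
  proof -
    have "W1 $$ (i,j) = sqrt (xs i) * sqrt (xs j) * (C - lam \<cdot>\<^sub>m 1\<^sub>m n) $$ (i,j)"
      unfolding W1_def B1_def A1C[symmetric] by (rule gram_W[OF A1c that])
    moreover have "W0 $$ (i,j) = sqrt (xs i) * sqrt (xs j) * C $$ (i,j)"
      unfolding W0_def B0_def A0C[symmetric] by (rule gram_W[OF A0c that])
    ultimately show ?thesis using that Cc x01[OF that(1)] by (auto simp: algebra_simps)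
  qed
  have qfW: "qf n W1 z = qf n W0 z - lam * (\<Sum>j<n. xs j * (z j)^2)" for z
  proof -
    have "qf n W1 z = (\<Sum>a<n. \<Sum>b<n. z a * W0 $$ (a,b) * z b - lam * (if a = b then xs a * (z a)^2 else 0))"
      unfolding qf_def by (intro sum.cong refl) (auto simp: Wrel algebra_simps power2_eq_square)
    also have "\<dots> = qf n W0 z - lam * (\<Sum>j<n. xs j * (z j)^2)"
      unfolding qf_def by (simp add: sum_subtractf sum_distrib_left[symmetric] sum.delta')
    finally show ?thesis .
  qed
  have trW: "tr n W1 = tr n W0 - lam * real s"
    unfolding tr_def using xsum by (simp add: Wrel sum_subtractf sum_distrib_left[symmetric])
  define \<beta> where "\<beta> i = eigs W0 ! i" for i
  obtain V where V: "orth n V" and decW0: "W0 = V * dg n \<beta> * transpose_mat V"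
    and srt: "sorted (rev (eigs W0))" and lenW0: "length (eigs W0) = n"
    using spectral[OF W0c] W0psd unfolding \<beta>_def psd_cone_def by blast
  have Vc: "V \<in> carrier_mat n n" using V orth_def by auto
  have \<beta>0: "\<beta> i \<ge> 0" if "i < n" for i using spectral_psd[OF W0psd] that unfolding \<beta>_def by blast
  have \<beta>dec: "\<beta> j \<le> \<beta> i" if "i \<le> j" "j < n" for i j
    unfolding \<beta>_def by (rule sorted_rev_nth[OF srt that(1)]) (use that lenW0 in simp)
  have eigX0: "eig (Mx n A0 xs) j = \<beta> (j - 1)" for j
    unfolding X0_def[symmetric] eig_def eigsX0 \<beta>_def ..
  have tailsum: "(\<Sum>i = k + 1..n. eig (Mx n A0 xs) i) = (\<Sum>i\<in>{k..<n}. \<beta> i)"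
  proof -
    have "(\<Sum>i = k + 1..n. eig (Mx n A0 xs) i) = (\<Sum>i\<in>{Suc k..<Suc n}. \<beta> (i - 1))"
      unfolding eigX0 by (intro sum.cong) auto
    also have "\<dots> = (\<Sum>i\<in>{k..<n}. \<beta> (Suc i - 1))" by (rule sum.shift_bounds_Suc_ivl)
    also have "\<dots> = (\<Sum>i\<in>{k..<n}. \<beta> i)" by simp
    finally show ?thesis .
  qed
  define a where "a = (\<Sum>i\<in>{k..<n}. \<beta> i) / real (s - k)"
  have asum: "(\<Sum>i\<in>{k..<n}. \<beta> i) = real (s - k) * a" unfolding a_def using ks by simp
  have ak: "\<beta> k \<le> a" using hyp2[unfolded tailsum] unfolding eigX0 a_def by simp
  have ka: "k = 0 \<or> \<beta> (k - 1) > a" using hyp1[unfolded tailsum] unfolding eigX0 a_def by simp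
  have kn': "k \<le> n" using ks sn by simp
  have apos: "a > 0"
  proof (rule ccontr)
    assume "\<not> a > 0"
    then have "(\<Sum>i\<in>{k..<n}. \<beta> i) \<le> 0" using asum ks by (simp add: mult_nonneg_nonpos)
    then have bz: "\<beta> i = 0" if "k \<le> i" "i < n" for i
      using sum_nonneg_eq_0_iff[of "{k..<n}" \<beta>] \<beta>0 that
      by (metis (no_types, lifting) atLeastLessThan_iff dual_order.antisym finite_atLeastLessThan sum_nonneg)
    have key: "xs j \<le> (\<Sum>i<k. (V $$ (j,i))^2)" if j: "j < n" for j
    proof (cases "xs j > 0")
      case False
      then show ?thesis by (smt (verit) sum_nonneg zero_le_power2)
    next
      case True
      define z where "z b = (\<Sum>i\<in>{k..<n}. V $$ (j,i) * V $$ (b,i))" for b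
      have inner: "(\<Sum>b<n. V $$ (b,l) * z b) = (if k \<le> l then V $$ (j,l) else 0)" if l: "l < n" for l
      proof -
        have "(\<Sum>b<n. V $$ (b,l) * z b) = (\<Sum>i\<in>{k..<n}. V $$ (j,i) * (\<Sum>b<n. V $$ (b,l) * V $$ (b,i)))"
          unfolding z_def sum_distrib_left by (subst sum.swap) (simp add: algebra_simps)
        also have "\<dots> = (\<Sum>i\<in>{k..<n}. if i = l then V $$ (j,i) else 0)"
          by (intro sum.cong refl) (use l in \<open>simp add: orth_cols[OF V]\<close>)
        also have "\<dots> = (if k \<le> l then V $$ (j,l) else 0)" using l by (simp add: sum.delta')
        finally show ?thesis .
      qed
      have "qf n W0 z = (\<Sum>l<n. \<beta> l * (\<Sum>b<n. V $$ (b,l) * z b)^2)" unfolding decW0 by (rule qf_dec[OF Vc])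
      also have "\<dots> = 0" by (intro sum.neutral ballI) (auto simp: inner bz)
      finally have q0: "qf n W0 z = 0" .
      have "qf n W1 z \<ge> 0" by (rule psd_qf[OF W1psd])
      then have "(\<Sum>b<n. xs b * (z b)^2) \<le> 0" using qfW[of z] q0 lam by (simp add: mult_le_0_iff)
      moreover have "xs j * (z j)^2 \<le> (\<Sum>b<n. xs b * (z b)^2)"
        by (rule member_le_sum) (use j x01 in auto)
      ultimately have "xs j * (z j)^2 \<le> 0" by simp
      then have zj: "z j = 0" using True by (simp add: mult_le_0_iff)
      have "(\<Sum>i<n. (V $$ (j,i))^2) = 1" using orth_rows[OF V j j] by (simp add: power2_eq_square)
      then have "(\<Sum>i<k. (V $$ (j,i))^2) + z j = 1"
        unfolding z_def using split_sum[OF kn', of "\<lambda>i. (V $$ (j,i))^2"] by (simp add: power2_eq_square)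
      then show ?thesis using zj x01[OF j] by simp
    qed
    have "real s = (\<Sum>j<n. xs j)" using xsum by simp
    also have "\<dots> \<le> (\<Sum>j<n. \<Sum>i<k. (V $$ (j,i))^2)" by (rule sum_mono) (use key in simp)
    also have "\<dots> = (\<Sum>i<k. \<Sum>j<n. (V $$ (j,i))^2)" by (rule sum.swap)
    also have "\<dots> = (\<Sum>i<k. 1)" using orth_cols[OF V] kn' by (intro sum.cong refl) (simp add: power2_eq_square)
    finally have "real s \<le> real k" by simp
    then show False using ks by simp
  qed
  define \<Gamma> where "\<Gamma> = (\<Sum>i<k. ln (\<beta> i)) + real (s - k) * ln a"
  have low: "zhat n s A0 0 \<ge> ereal \<Gamma>"
  proof -
    have "Phi_hat n s X0 0 \<ge> ereal \<Gamma>"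
      unfolding \<Gamma>_def \<beta>_def eigsX0[symmetric]
      by (rule lower_bound[OF X0psd ks sn apos]) (use asum ka ak in \<open>simp_all add: \<beta>_def eigsX0\<close>)
    moreover have "zhat n s A0 0 \<ge> Phi_hat n s X0 0"
      unfolding zhat_def X0_def by (rule SUP_upper) (use feas in simp)
    ultimately show ?thesis by simp
  qed
  define c where "c i = 1 / a - 1 / \<beta> i" for i
  define d where "d i = (\<Sum>j<n. xs j * (V $$ (j,i))^2)" for i
  have kn': "k \<le> n" using ks sn by simp
  have \<beta>big': "\<beta> i > a" if "i < k" for i
  proof -
    have "\<beta> (k - 1) > a" using ka that by auto
    moreover have "\<beta> (k - 1) \<le> \<beta> i" using \<beta>dec[of i "k - 1"] that kn' by simp
    ultimately show ?thesis by simp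
  qed
  have up: "zhat n s A1 lam \<le> ereal (\<Gamma> - lam * (\<Sum>i<k. c i * (1 - d i)))"
  proof -
    define \<mu> where "\<mu> i = eigs X1 ! i" for i
    obtain U1 where U1: "orth n U1" and decX1: "X1 = U1 * dg n \<mu> * transpose_mat U1"
      using spectral[OF X1c] X1psd unfolding \<mu>_def psd_cone_def by blast
    obtain V1 where V1: "orth n V1" and decW1: "W1 = V1 * dg n \<mu> * transpose_mat V1"
      using spectral[OF W1c] W1psd unfolding \<mu>_def eigsX1 psd_cone_def by blast
    define Z where "Z = U1 * transpose_mat V1 * V"
    have Z: "orth n Z" unfolding Z_def by (intro orth_mult orth_tr U1 V1 V)
    define c0 where "c0 = (\<Sum>i<k. ln (\<beta> i)) + real (s - k) * ln a - real s
      + lam * ((\<Sum>i<k. 1 / \<beta> i) + real (s - k) / a)"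
    define g where "g Y = c0 + tr n Y / a - (\<Sum>i<k. (1 / a - 1 / \<beta> i) * qf n Y (\<lambda>j. Z $$ (j,i)))" for Y
    have gmaj: "Phi s Y lam \<le> ereal (g Y)" if "Y \<in> psd_cone n" for Y
      unfolding g_def c0_def
      by (rule majorant[OF Z _ sn lam apos _ _ that]) (use ks \<beta>big' \<beta>dec kn' in \<open>auto simp: less_imp_le\<close>)
    have gconc: "concave_on_psd n g" unfolding g_def by (rule linear_concave)
    have "Phi_hat n s X1 lam \<le> ereal (g X1)"
      unfolding Phi_hat_def by (rule INF_lower) (use gmaj gconc in blast)
    moreover have "zhat n s A1 lam \<le> Phi_hat n s X1 lam"
      unfolding zhat_def X1_def by (rule SUP_least) (use opt in \<open>auto simp: optimal_def lam_def\<close>)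
    moreover have "g X1 = \<Gamma> - lam * (\<Sum>i<k. c i * (1 - d i))"
    proof -
      have trX1: "tr n X1 = tr n W1" unfolding decX1 decW1 tr_dec[OF U1] tr_dec[OF V1] ..
      have trW0: "tr n W0 = (\<Sum>i<k. \<beta> i) + real (s - k) * a"
        unfolding decW0 tr_dec[OF V] using split_sum[OF kn', of \<beta>] asum by simp
      have qfX1: "qf n X1 (\<lambda>j. Z $$ (j,i)) = \<beta> i - lam * d i" if i: "i < n" for i
      proof -
        have "qf n X1 (\<lambda>j. Z $$ (j,i)) = qf n W1 (\<lambda>j. V $$ (j,i))"
          unfolding decX1 decW1 Z_def by (rule qf_transfer[OF U1 V1 Vc i])
        also have "\<dots> = qf n W0 (\<lambda>j. V $$ (j,i)) - lam * d i" unfolding qfW d_def ..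
        also have "qf n W0 (\<lambda>j. V $$ (j,i)) = \<beta> i" unfolding decW0 by (rule qf_col[OF V i])
        finally show ?thesis .
      qed
      have s1: "(\<Sum>i<k. (1 / a - 1 / \<beta> i) * qf n X1 (\<lambda>j. Z $$ (j,i)))
          = (\<Sum>i<k. \<beta> i) / a - real k - lam * (\<Sum>i<k. c i * d i)"
      proof -
        have "(\<Sum>i<k. (1 / a - 1 / \<beta> i) * qf n X1 (\<lambda>j. Z $$ (j,i)))
            = (\<Sum>i<k. (\<beta> i / a - 1) - lam * (c i * d i))"
        proof (rule sum.cong[OF refl])
          fix i assume i: "i \<in> {..<k}"
          then have bp: "\<beta> i > 0" using \<beta>big'[of i] apos by simp
          have q: "qf n X1 (\<lambda>j. Z $$ (j,i)) = \<beta> i - lam * d i" using qfX1[of i] i kn' by simp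
          show "(1 / a - 1 / \<beta> i) * qf n X1 (\<lambda>j. Z $$ (j,i)) = (\<beta> i / a - 1) - lam * (c i * d i)"
            unfolding q c_def using bp apos by (simp add: field_simps)
        qed
        also have "\<dots> = (\<Sum>i<k. \<beta> i) / a - real k - lam * (\<Sum>i<k. c i * d i)"
          by (simp add: sum_subtractf sum_divide_distrib sum_distrib_left)
        finally show ?thesis .
      qed
      have s2: "(\<Sum>i<k. c i * (1 - d i)) = real k / a - (\<Sum>i<k. 1 / \<beta> i) - (\<Sum>i<k. c i * d i)"
      proof -
        have "(\<Sum>i<k. c i * (1 - d i)) = (\<Sum>i<k. c i) - (\<Sum>i<k. c i * d i)"
          by (simp add: algebra_simps sum_subtractf)
        moreover have "(\<Sum>i<k. c i) = real k / a - (\<Sum>i<k. 1 / \<beta> i)" unfolding c_def by (simp add: sum_subtractf)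
        ultimately show ?thesis by simp
      qed
      show ?thesis
        unfolding g_def s1 s2 trX1 trW trW0 c0_def \<Gamma>_def
        using apos ks by (simp add: field_simps of_nat_diff)
    qed
    ultimately show ?thesis by simp
  qed
  have kn: "k \<le> n" using ks sn by simp
  have \<beta>big: "\<beta> i > a" if "i < k" for i
  proof -
    have "\<beta> (k - 1) > a" using ka that by auto
    moreover have "\<beta> (k - 1) \<le> \<beta> i" using \<beta>dec[of i "k - 1"] that kn by simp
    ultimately show ?thesis by simp
  qed
  define E where "E = real k - (\<Sum>i = 1..k. xdown n xs i)"
  define F where "F = real (s - k) / (\<Sum>i = k + 1..n. eig (Mx n A0 xs) i) - (if k = 0 then 0 else 1 / eig (Mx n A0 xs) k)"
  have Fval: "F = (if k = 0 then 1 / a else c (k - 1))"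
    unfolding F_def tailsum asum c_def using ks apos by (simp add: eigX0)
  have xd1: "xdown n xs i \<le> 1" if "1 \<le> i" "i \<le> n" for i
    by (rule xdown_le1[OF _ that]) (use x01 in simp)
  have E0: "E \<ge> 0"
  proof -
    have "(\<Sum>i = 1..k. xdown n xs i) \<le> (\<Sum>i = 1..k. 1)" by (rule sum_mono) (use xd1 kn in auto)
    then show ?thesis unfolding E_def by simp
  qed
  have ck: "c (k - 1) > 0" if "k \<ge> 1"
    using \<beta>big[of "k - 1"] that apos unfolding c_def by (simp add: frac_less2)
  have F0: "F \<ge> 0" unfolding Fval using ck apos by auto
  have d1: "d i \<le> 1" if "i < n" for i
  proof -
    have "d i \<le> (\<Sum>j<n. (V $$ (j,i))^2)" unfolding d_def
      by (rule sum_mono) (use x01 in \<open>auto intro!: mult_left_le_one_le\<close>)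
    also have "\<dots> = 1" using orth_cols[OF V that that] by (simp add: power2_eq_square)
    finally show ?thesis .
  qed
  have comb: "(\<Sum>i<k. c i * (1 - d i)) \<ge> E * F"
  proof (cases "k = 0")
    case True then show ?thesis unfolding E_def by simp
  next
    case False
    then have k1: "k \<ge> 1" by simp
    have "(\<Sum>i<k. c i * (1 - d i)) \<ge> (\<Sum>i<k. c (k - 1) * (1 - d i))"
    proof (rule sum_mono)
      fix i assume i: "i \<in> {..<k}"
      have "c (k - 1) \<le> c i" unfolding c_def
        using \<beta>dec[of i "k - 1"] \<beta>big[of i] \<beta>big[of "k - 1"] apos i kn k1 by (simp add: frac_le)
      moreover have "1 - d i \<ge> 0" using d1[of i] i kn by simp
      ultimately show "c (k - 1) * (1 - d i) \<le> c i * (1 - d i)" by (rule mult_right_mono)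
    qed
    also have "(\<Sum>i<k. c (k - 1) * (1 - d i)) = c (k - 1) * (real k - (\<Sum>i<k. d i))"
      by (simp add: sum_distrib_left[symmetric] sum_subtractf)
    finally have 1: "(\<Sum>i<k. c i * (1 - d i)) \<ge> c (k - 1) * (real k - (\<Sum>i<k. d i))" .
    have "(\<Sum>i<k. d i) \<le> (\<Sum>i = 1..k. xdown n xs i)"
      unfolding d_def by (rule xdown_bound[OF V kn]) (use x01 in simp)
    then have "c (k - 1) * (real k - (\<Sum>i<k. d i)) \<ge> c (k - 1) * E"
      unfolding E_def using ck[OF k1] by (intro mult_left_mono) auto
    then show ?thesis using 1 Fval False by (simp add: mult.commute)
  qed
  have upD: "zhat n s A1 lam \<le> ereal (\<Gamma> - lam * E * F)"
  proof -
    have "lam * (E * F) \<le> lam * (\<Sum>i<k. c i * (1 - d i))" using comb lam by (intro mult_left_mono) auto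
    then have "ereal (\<Gamma> - lam * (\<Sum>i<k. c i * (1 - d i))) \<le> ereal (\<Gamma> - lam * E * F)"
      by (simp add: mult.assoc)
    then show ?thesis using up by (rule order.trans[rotated])
  qed
  have Dnn: "lam * E * F \<ge> 0" using lam E0 F0 by simp
  have strict: "k \<ge> 1 \<and> xdown n xs k < 1 \<longrightarrow> zhat n s A0 0 > zhat n s A1 (lambda_min C)"
  proof
    assume h: "k \<ge> 1 \<and> xdown n xs k < 1"
    obtain k' where k': "k = Suc k'" using h by (cases k) auto
    have "(\<Sum>i = 1..k. xdown n xs i) = (\<Sum>i = 1..k - 1. xdown n xs i) + xdown n xs k"
      unfolding k' by simp
    also have "(\<Sum>i = 1..k - 1. xdown n xs i) \<le> (\<Sum>i = 1..k - 1. 1)" by (rule sum_mono) (use xd1 kn in auto)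
    finally have "(\<Sum>i = 1..k. xdown n xs i) < real k" using h by simp
    then have "E > 0" unfolding E_def by simp
    moreover have "F > 0" unfolding Fval using ck h by simp
    ultimately have "lam * E * F > 0" using lam by simp
    then have "ereal (\<Gamma> - lam * E * F) < ereal \<Gamma>" by simp
    then have "zhat n s A1 lam < ereal \<Gamma>" using upD by (rule le_less_trans[rotated])
    then show "zhat n s A0 0 > zhat n s A1 (lambda_min C)" using low unfolding lam_def by simp
  qed
  have "zhat n s A0 0 - zhat n s A1 lam \<ge> ereal (lam * E * F)"
    by (rule ereal_diff_bound[OF low upD])
  then show ?thesis using Dnn strict unfolding E_def F_def lam_def by simp
qed

end
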